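(* Fix $\sigma\in(0,\tfrac12)$. There exists $\lambda^{*}>0$ such that, denoting by $\overline{\Gamma_1(\lambda)}$ the closure of $\Gamma_1(\lambda)$ in $\mathbb{R}^2$: - for $\lambda\in(0,\lambda^{*})$, $\overline{\Gamma_1(\lambda)}\cap(\{0\}\times(0,+\infty))=\emptyset$; - for $\lambda=\lambda^{*}$, $\overline{\Gamma_1(\lambda)}\cap(\{0\}\times(0,+\infty))=\{(0,\xi^{*})\}$ for some $\xi^{*}\in(0,+\infty)$; - for $\lambda>\lambda^{*}$, $\overline{\Gamma_1(\lambda)}\cap(\{0\}\times(0,+\infty))=\{(0,\xi_0),(0,\xi_1)\}$ for some $0<\xi_0<\xi_1$.
   Context: Let $g(s)=s^2(1-s)$ and $G(u)=u^3/3-u^4/4$ on $[0,1]$. For $\lambda>0$ and $s\in(0,1)$, let $(\hat u_s,\hat v_s)$ be the unique solution, on its maximal interval of existence, of $u'=v$, $v'=-\lambda g(u)$, $u(1)=s$, $v(1)=0$. Let $\hat T_0(s)$ be the time taken by $(\hat u_s,\hat v_s)$ to go from $(s,0)$ to the half-line $\{0\}\times(0,+\infty)$ moving backwards in time along the level line $v^2+2\lambda G(u)=2\lambda G(s)$, let $\mathcal{I}^1_\lambda=\{s\in(0,1):\hat T_0(s)>\sigma\}$, and let $\Gamma_1(\lambda)=\{(\hat u_s(1-\sigma),\hat v_s(1-\sigma)): s\in\mathcal{I}^1_\lambda\}$. *)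

theory Defs
  imports "HOL-Analysis.Analysis"
begin

definition g :: "real \<Rightarrow> real" where
  "g s = s^2 * (1 - s)"

definition G :: "real \<Rightarrow> real" where
  "G u = u^3/3 - u^4/4"

definition is_sol :: "real \<Rightarrow> real \<Rightarrow> (real \<Rightarrow> real) \<Rightarrow> (real \<Rightarrow> real) \<Rightarrow> real set \<Rightarrow> bool" where
  "is_sol lam s u v T \<longleftrightarrow> is_interval T \<and> 1 \<in> T \<and> u 1 = s \<and> v 1 = 0 \<and>
     (\<forall>t\<in>T. (u has_real_derivative v t) (at t within T) \<and>
             (v has_real_derivative (- lam * g (u t))) (at t within T))"

text \<open>Time taken, moving backwards in time from (s,0) at time 1, to reach
  the half-line {0} x (0,+inf): the first (least) t > 0 such that the solution
  exists on [1-t,1] and (u(1-t),v(1-t)) lies on the half-line.\<close>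
definition T0hat :: "real \<Rightarrow> real \<Rightarrow> real" where
  "T0hat lam s = Inf {t. t > 0 \<and> (\<exists>u v. is_sol lam s u v {1-t..1} \<and> u (1-t) = 0 \<and> v (1-t) > 0)}"

definition I1 :: "real \<Rightarrow> real \<Rightarrow> real set" where
  "I1 lam \<sigma> = {s. 0 < s \<and> s < 1 \<and> T0hat lam s > \<sigma>}"

definition Gamma1 :: "real \<Rightarrow> real \<Rightarrow> (real \<times> real) set" where
  "Gamma1 lam \<sigma> = {p. \<exists>s\<in>I1 lam \<sigma>. \<exists>u v. is_sol lam s u v {1-\<sigma>..1} \<and> p = (u (1-\<sigma>), v (1-\<sigma>))}"

end

theory Submission
  imports Defs
begin

definition cw :: "real \<Rightarrow> real" where "cw z = 1 - z^2"
definition ca :: "real \<Rightarrow> real" where "ca z = (1 + cw z + (cw z)^2)/3"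
definition cb :: "real \<Rightarrow> real" where "cb z = (1 + cw z)*(1 + (cw z)^2)/4"
definition Pq :: "real \<Rightarrow> real \<Rightarrow> real" where "Pq s z = 2* s*(ca z - s*cb z)"
definition kk :: "real \<Rightarrow> real \<Rightarrow> real" where "kk s z = 2 / sqrt (Pq s z)"
definition Psi :: "real \<Rightarrow> real \<Rightarrow> real" where "Psi s z = integral {-2..z} (kk s)"
definition tau :: "real \<Rightarrow> real" where "tau s = integral {0..1} (kk s)"

lemma ab_decomp: "12*(ca z - s*cb z) = (1-s)*(4*(1 + cw z + (cw z)^2)) + s*((1 - cw z)*(3*(cw z)^2 + 2*cw z + 1))"
  unfolding ca_def cb_def by (simp add: field_simps) algebra

lemma Pq_pos: assumes "0<s" "s<1" shows "Pq s z > 0"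
proof -
  have w1: "cw z \<le> 1" by (simp add: cw_def)
  have e1: "1 + cw z + (cw z)^2 = (cw z + 1/2)^2 + 3/4" by (simp add: power2_eq_square algebra_simps)
  have q1: "1 + cw z + (cw z)^2 > 0" unfolding e1 by (metis add_nonneg_pos zero_le_power2 divide_pos_pos zero_less_numeral)
  have e2: "3*(cw z)^2 + 2*cw z + 1 = 3*(cw z + 1/3)^2 + 2/3" by (simp add: power2_eq_square algebra_simps)
  have q2: "3*(cw z)^2 + 2*cw z + 1 > 0" unfolding e2 by (metis add_nonneg_pos zero_le_power2 divide_pos_pos zero_less_numeral mult_nonneg_nonneg zero_le_numeral)
  have "(1-s)*(4*(1 + cw z + (cw z)^2)) > 0" using assms q1 by simp
  moreover have "s*((1 - cw z)*(3*(cw z)^2 + 2*cw z + 1)) \<ge> 0" using assms q2 w1 by simp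
  ultimately have "12*(ca z - s*cb z) > 0" unfolding ab_decomp by (rule add_pos_nonneg)
  then have "ca z - s*cb z > 0" by simp
  then show ?thesis using assms unfolding Pq_def by simp
qed

lemma G_diff: "G s - G (s*(1-z^2)) = s^2*z^2*Pq s z/2"
  unfolding G_def Pq_def ca_def cb_def cw_def by (simp add: field_simps) algebra

lemma kk_cont: assumes "0<s" "s<1" shows "continuous_on S (kk s)"
proof -
  have "continuous_on S (\<lambda>z. Pq s z)" unfolding Pq_def ca_def cb_def cw_def by (intro continuous_intros) auto
  moreover have "\<forall>z. Pq s z \<noteq> 0" using Pq_pos[OF assms] by (metis less_irrefl)
  ultimately show ?thesis unfolding kk_def
    by (intro continuous_intros) auto
qed

lemma kk_pos: assumes "0<s" "s<1" shows "kk s z > 0"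
  using Pq_pos[OF assms] unfolding kk_def by simp

lemma Psi_deriv: assumes "0<s" "s<1" "-2 < z" shows "(Psi s has_real_derivative kk s z) (at z)"
proof -
  have "((\<lambda>x. integral {-2..x} (kk s)) has_real_derivative kk s z) (at z within {-2..z+1})"
    by (rule integral_has_real_derivative) (use kk_cont[OF assms(1,2)] assms in auto)
  moreover have "z \<in> interior {-2..z+1}" using assms by auto
  ultimately show ?thesis unfolding Psi_def using at_within_interior by metis
qed


lemma phi_convex: "convex_on {0<..} (\<lambda>p::real. 2 / sqrt p)"
proof (rule convex_on_realI[where f'="\<lambda>p. - 1 / (p * sqrt p)"])
  show "connected {0::real<..}" by simp
  fix x assume x: "x \<in> {0::real<..}"
  then have "((\<lambda>p. 2 / sqrt p) has_real_derivative - 1 / (x * sqrt x)) (at x)"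
    by (auto intro!: derivative_eq_intros simp: field_simps)
  then show "((\<lambda>p. 2 / sqrt p) has_real_derivative - 1 / (x * sqrt x)) (at x)" .
next
  fix x y :: real assume "x \<in> {0<..}" "y \<in> {0<..}" "x \<le> y"
  then have "x * sqrt x \<le> y * sqrt y" "0 < x * sqrt x" by (auto intro!: mult_mono)
  then show "- 1 / (x * sqrt x) \<le> - 1 / (y * sqrt y)"
    by (simp add: frac_le)
qed

lemma cw_01: assumes "0 \<le> z" "z \<le> 1" shows "0 \<le> cw z" "cw z \<le> 1"
  using assms unfolding cw_def by (auto simp: power_le_one)

lemma cb_pos: assumes "0 \<le> z" "z \<le> 1" shows "cb z \<ge> 1/4"
proof -
  have e: "(1 + cw z)*(1 + (cw z)^2) = 1 + cw z + (cw z)^2 + (cw z)^3"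
    by (simp add: algebra_simps power2_eq_square power3_eq_cube)
  have "1 \<le> (1 + cw z)*(1 + (cw z)^2)"
    unfolding e using cw_01[OF assms] by simp
  then show ?thesis unfolding cb_def by simp
qed

lemma Pq_mid: "Pq ((1-t)*x+t*y) z = (1-t)*Pq x z + t*Pq y z + 2*t*(1-t)*cb z*(x-y)^2"
  unfolding Pq_def by (simp add: algebra_simps power2_eq_square)

lemma mid_in: fixes x y t :: real assumes "0<x" "x<1" "0<y" "y<1" "0<t" "t<1"
  shows "0 < (1-t)*x+t*y" "(1-t)*x+t*y < 1"
proof -
  have a1: "0 < (1-t)*x" using assms by (intro mult_pos_pos) auto
  have a2: "0 < t*y" using assms by (intro mult_pos_pos) auto
  from a1 a2 show "0 < (1-t)*x+t*y" by simp
  have "(1-t)*x < (1-t)*1" using assms by (intro mult_strict_left_mono) auto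
  moreover have "t*y < t*1" using assms by (intro mult_strict_left_mono) auto
  ultimately show "(1-t)*x+t*y < 1" by simp
qed

lemma kk_strict:
  assumes x: "0<x" "x<1" and y: "0<y" "y<1" and "x \<noteq> y" and t: "0<t" "t<1" and z: "0 \<le> z" "z \<le> 1"
  shows "kk ((1-t)*x+t*y) z < (1-t)*kk x z + t*kk y z"
proof -
  define m where "m = (1-t)*x+t*y"
  have m: "0 < m" "m < 1" unfolding m_def using mid_in[OF x y t] by auto
  define L where "L = (1-t)*Pq x z + t*Pq y z"
  have L: "L > 0" unfolding L_def using Pq_pos[OF x] Pq_pos[OF y] t
    by (simp add: add_pos_pos)
  have "2*t*(1-t)*cb z*(x-y)^2 > 0" using cb_pos[OF z] t assms(5) by simp
  then have PL: "Pq m z > L" unfolding m_def L_def Pq_mid by simp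
  have "kk m z = 2 / sqrt (Pq m z)" by (simp add: kk_def)
  also have "\<dots> < 2 / sqrt L" using PL L by (simp add: divide_strict_left_mono)
  also have "\<dots> \<le> (1-t) * (2 / sqrt (Pq x z)) + t * (2 / sqrt (Pq y z))"
    using convex_onD[OF phi_convex, of t "Pq x z" "Pq y z"] t Pq_pos[OF x] Pq_pos[OF y]
    unfolding L_def by simp
  finally show ?thesis unfolding m_def kk_def .
qed

lemma tau_strict:
  assumes x: "0<x" "x<1" and y: "0<y" "y<1" and "x \<noteq> y" and t: "0<t" "t<1"
  shows "tau ((1-t)*x+t*y) < (1-t)*tau x + t*tau y"
proof -
  have m: "0 < (1-t)*x+t*y" "(1-t)*x+t*y < 1" using mid_in[OF x y t] by auto
  have ix: "kk x integrable_on {0..1}" using kk_cont[OF x] integrable_continuous_interval by blast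
  have iy: "kk y integrable_on {0..1}" using kk_cont[OF y] integrable_continuous_interval by blast
  have "integral {0..1} (kk ((1-t)*x+t*y)) < integral {0..1} (\<lambda>z. (1-t)*kk x z + t*kk y z)"
    by (rule integral_less_real) (use kk_cont[OF x] kk_cont[OF y] kk_cont[OF m] kk_strict[OF assms] in \<open>auto intro!: continuous_intros\<close>)
  also have "\<dots> = (1-t)*tau x + t*tau y"
  proof -
    have "((\<lambda>z. (1-t)*kk x z + t*kk y z) has_integral ((1-t)*tau x + t*tau y)) {0..1}"
      unfolding tau_def
      by (intro has_integral_add has_integral_mult_right integrable_integral ix iy)
    then show ?thesis by blast
  qed
  finally show ?thesis unfolding tau_def .
qed

lemma tau_convex: "convex_on {0<..<1} tau"
  unfolding convex_on_def
proof (intro conjI ballI allI impI)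
  show "convex {0<..<(1::real)}" by simp
  fix x y u v :: real assume xy: "x \<in> {0<..<1}" "y \<in> {0<..<1}" and uv: "0 \<le> u" "0 \<le> v" "u + v = 1"
  then have u: "u = 1 - v" by simp
  show "tau (u *\<^sub>R x + v *\<^sub>R y) \<le> u * tau x + v * tau y"
  proof (cases "x = y \<or> v = 0 \<or> v = 1")
    case True then show ?thesis using u by (auto simp: algebra_simps simp flip: distrib_right)
  next
    case False
    then show ?thesis using tau_strict[of x y v] xy uv u by auto
  qed
qed

lemma tau_cont: "continuous_on {0<..<1} tau"
  by (rule convex_on_continuous) (auto intro: tau_convex)

lemma ca_le1: assumes "0 \<le> z" "z \<le> 1" shows "ca z \<le> 1"
proof -
  have "(cw z)^2 \<le> 1" using cw_01[OF assms] by (simp add: power_le_one)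
  then show ?thesis using cw_01[OF assms] unfolding ca_def by simp
qed

lemma cb_le1: assumes "0 \<le> z" "z \<le> 1" shows "cb z \<le> 1"
proof -
  have "(cw z)^2 \<le> 1" using cw_01[OF assms] by (simp add: power_le_one)
  then have "(1 + cw z)*(1 + (cw z)^2) \<le> 2 * 2" using cw_01[OF assms]
    by (intro mult_mono) auto
  then show ?thesis unfolding cb_def by simp
qed

lemma ca_cb: "ca z - cb z = z^2*(3*(cw z)^2+2*cw z+1)/12"
  using ab_decomp[of z 1] by (simp add: cw_def)

lemma Pq_le: assumes "0<s" "s<1" "0 \<le> z" "z \<le> 1" shows "Pq s z \<le> 2* s"
proof -
  have "s*cb z \<ge> 0" using cb_pos[OF assms(3,4)] assms by simp
  then have "ca z - s*cb z \<le> 1" using ca_le1[OF assms(3,4)] by linarith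
  then show ?thesis unfolding Pq_def using assms by simp
qed

lemma kk_lower: assumes "0<s" "s<1" "0 \<le> z" "z \<le> 1" shows "2 / sqrt (2* s) \<le> kk s z"
  unfolding kk_def using Pq_le[OF assms] Pq_pos[OF assms(1,2)] assms
  by (intro divide_left_mono) auto

lemma kk_ge1: assumes "0<s" "s<1" "0 \<le> z" "z \<le> 1" shows "1 \<le> kk s z"
proof -
  have "sqrt (2* s) \<le> sqrt 4" using assms by (intro real_sqrt_le_mono) auto
  then have "sqrt (2* s) \<le> 2" by simp
  then have "1 \<le> 2 / sqrt (2* s)" using assms by simp
  then show ?thesis using kk_lower[OF assms] by linarith
qed

lemma Pq_le2: assumes "0<s" "s<1" "0 \<le> z" "z \<le> 1" shows "Pq s z \<le> z^2 + 2*(1-s)"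
proof -
  have "(cw z)^2 \<le> 1" using cw_01[OF assms(3,4)] by (simp add: power_le_one)
  then have w: "3*(cw z)^2+2*cw z+1 \<le> 6" using cw_01[OF assms(3,4)] by linarith
  have "z^2*(3*(cw z)^2+2*cw z+1) \<le> z^2*6" using w by (intro mult_left_mono) auto
  then have "ca z - cb z \<le> z^2/2" unfolding ca_cb by simp
  moreover have "(1-s)*cb z \<le> 1-s" using cb_le1[OF assms(3,4)] assms by simp
  moreover have X: "ca z - s*cb z > 0" using Pq_pos[OF assms(1,2), of z] assms unfolding Pq_def
    by (simp add: zero_less_mult_iff)
  ultimately have A: "ca z - s*cb z \<le> z^2/2 + (1-s)" by (simp add: algebra_simps)
  have "s*(ca z - s*cb z) \<le> 1*(ca z - s*cb z)" using X assms by (intro mult_right_mono) auto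
  moreover have "Pq s z = 2*(s*(ca z - s*cb z))" unfolding Pq_def by simp
  ultimately have "Pq s z \<le> 2*(ca z - s*cb z)" by simp
  then show ?thesis using A by simp
qed

lemma Pq_ge: assumes "0<s" "s<1" "1/2 \<le> z" "z \<le> 1" shows "s/24 \<le> Pq s z"
proof -
  have z: "0 \<le> z" using assms by simp
  have w: "1 \<le> 3*(cw z)^2+2*cw z+1" using cw_01[OF z assms(4)] by simp
  have "(1/2)^2 \<le> z^2" using assms by (intro power_mono) auto
  then have "1/4 \<le> z^2" by (simp add: power2_eq_square)
  then have "1/4 * 1 \<le> z^2*(3*(cw z)^2+2*cw z+1)" using w by (intro mult_mono) auto
  then have "1/48 \<le> ca z - cb z" unfolding ca_cb by simp
  moreover have "s * cb z \<le> cb z" using cb_pos[OF z assms(4)] assms by simp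
  ultimately have "1/48 \<le> ca z - s*cb z" by simp
  then show ?thesis unfolding Pq_def using assms by simp
qed

lemma kk_upper: assumes "0<s" "s<1" "1/2 \<le> z" "z \<le> 1" shows "kk s z \<le> 2 / sqrt (s/24)"
  unfolding kk_def using Pq_ge[OF assms] assms
  by (intro divide_left_mono) auto

lemma tau_ge0: assumes "0<s" "s<1" shows "2 / sqrt (2* s) \<le> tau s"
proof -
  have "integral {0..1} (\<lambda>z::real. 2 / sqrt (2* s)) \<le> integral {0..1} (kk s)"
  proof (rule Henstock_Kurzweil_Integration.integral_le)
    show "kk s integrable_on {0..1}" using kk_cont[OF assms] integrable_continuous_interval by blast
    show "(\<lambda>z::real. 2 / sqrt (2* s)) integrable_on {0..1::real}" by (intro integrable_continuous_interval continuous_intros)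
    show "\<And>x. x \<in> {0..1} \<Longrightarrow> 2 / sqrt (2* s) \<le> kk s x" using kk_lower[OF assms] by auto
  qed
  then show ?thesis unfolding tau_def by simp
qed

lemma tau_pos: assumes "0<s" "s<1" shows "0 < tau s"
proof -
  have "0 < 2 / sqrt (2* s)" using assms by simp
  then show ?thesis using tau_ge0[OF assms] by linarith
qed

lemma int_log: assumes "c > 0" shows "((\<lambda>z. 2/(z+c)) has_integral (2*ln(1+c) - 2*ln c)) {0..1::real}"
proof -
  have "((\<lambda>z. 2/(z+c)) has_integral (2*ln(1+c) - 2*ln(0+c))) {0..1::real}"
    by (rule fundamental_theorem_of_calculus[where f="\<lambda>z. 2*ln(z+c)"])
       (use assms in \<open>auto intro!: derivative_eq_intros simp: has_real_derivative_iff_has_vector_derivative[symmetric]\<close>)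
  then show ?thesis by simp
qed

lemma tau_ge1: assumes "0<s" "s<1" shows "- ln (2*(1-s)) \<le> tau s"
proof -
  define c where "c = sqrt (2*(1-s))"
  have c: "c > 0" unfolding c_def using assms by simp
  have "integral {0..1} (\<lambda>z. 2/(z+c)) \<le> integral {0..1} (kk s)"
  proof (rule Henstock_Kurzweil_Integration.integral_le)
    show "(\<lambda>z. 2/(z+c)) integrable_on {0..1}" using int_log[OF c] by blast
    show "kk s integrable_on {0..1}" using kk_cont[OF assms] integrable_continuous_interval by blast
    fix z assume z: "z \<in> {0..1::real}"
    have cc: "c^2 = 2*(1-s)" unfolding c_def using assms by simp
    have zc: "0 \<le> z*c" using z c by simp
    have "(z + c)^2 = z^2 + c^2 + 2*(z*c)" by (simp add: power2_eq_square algebra_simps)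
    then have "Pq s z \<le> (z + c)^2" using Pq_le2[of s z] assms z zc unfolding cc by simp
    then have "sqrt (Pq s z) \<le> z + c" using z c by (simp add: real_sqrt_le_iff) (metis real_sqrt_le_mono real_sqrt_abs abs_of_nonneg add_nonneg_nonneg less_imp_le)
    then show "2/(z+c) \<le> kk s z" unfolding kk_def using Pq_pos[OF assms, of z] z c
      by (intro divide_left_mono) auto
  qed
  also have "integral {0..1} (\<lambda>z. 2/(z+c)) = 2*ln(1+c) - 2*ln c" using int_log[OF c] by blast
  finally have "2*ln(1+c) - 2*ln c \<le> tau s" unfolding tau_def .
  moreover have "ln (1+c) \<ge> 0" using c by simp
  moreover have "2 * ln c = ln (2*(1-s))" unfolding c_def using assms
    by (simp add: ln_sqrt)
  ultimately show ?thesis by linarith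
qed

lemma tau_big0: "\<exists>d>0. d < 1 \<and> (\<forall>s. 0<s \<and> s<d \<longrightarrow> M < tau s)"
proof -
  define d where "d = 1/(2*(\<bar>M\<bar>+1)^2)"
  have "1 \<le> (\<bar>M\<bar>+1)^2" by (intro one_le_power) simp
  then have h: "0 < 2*(\<bar>M\<bar>+1)^2" "1 < 2*(\<bar>M\<bar>+1)^2" by linarith+
  then have d: "0 < d" "d < 1" unfolding d_def by simp_all
  show ?thesis
  proof (intro exI conjI allI impI)
    fix s assume s: "0<s \<and> s<d"
    then have s1: "s < 1" using d by simp
    have "2* s < 1/(\<bar>M\<bar>+1)^2" using s unfolding d_def by (simp add: field_simps)
    then have "sqrt (2* s) < sqrt (1/(\<bar>M\<bar>+1)^2)" by (simp add: real_sqrt_less_iff)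
    also have "\<dots> = 1/(\<bar>M\<bar>+1)" by (simp add: real_sqrt_divide)
    finally have "sqrt (2* s) < 1/(\<bar>M\<bar>+1)" .
    then have "2*(\<bar>M\<bar>+1) < 2 / sqrt (2* s)" using s by (simp add: field_simps)
    moreover have "2 / sqrt (2* s) \<le> tau s" using tau_ge0 s s1 by auto
    ultimately have "2*(\<bar>M\<bar>+1) < tau s" by linarith
    moreover have "M \<le> \<bar>M\<bar>" "0 \<le> \<bar>M\<bar>" by simp_all
    ultimately show "M < tau s" by argo
  qed (use d in auto)
qed

lemma tau_big1: "\<exists>d>0. d < 1 \<and> (\<forall>s. 1-d<s \<and> s<1 \<longrightarrow> M < tau s)"
proof -
  define d where "d = min (1/2) (exp (-M)/4)"
  have d: "0 < d" "d < 1" unfolding d_def by auto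
  show ?thesis
  proof (intro exI conjI allI impI)
    fix s assume s: "1-d<s \<and> s<1"
    then have s0: "0 < s" using d unfolding d_def by simp
    have "1-s < exp (-M)/4" using s unfolding d_def by linarith
    moreover have "0 < exp (-M)" by simp
    ultimately have "2*(1-s) < exp (-M)" by argo
    then have "ln (2*(1-s)) < ln (exp (-M))" using s by (subst ln_less_cancel_iff) auto
    then have "ln (2*(1-s)) < -M" by simp
    moreover have "- ln (2*(1-s)) \<le> tau s" using tau_ge1 s s0 by auto
    ultimately show "M < tau s" by linarith
  qed (use d in auto)
qed

lemma tau_strict': "0<x \<Longrightarrow> x<1 \<Longrightarrow> 0<y \<Longrightarrow> y<1 \<Longrightarrow> x<m \<Longrightarrow> m<y \<Longrightarrow>
   tau m < (y-m)/(y-x) * tau x + (m-x)/(y-x) * tau y"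
proof -
  assume a: "0<x" "x<1" "0<y" "y<1" "x<m" "m<y"
  define t where "t = (m-x)/(y-x)"
  have t: "0<t" "t<1" using a unfolding t_def by (auto simp: field_simps)
  have "t*(y-x) = m - x" using a unfolding t_def by simp
  then have m: "m = (1-t)*x+t*y" by (simp add: algebra_simps)
  have t2: "1 - t = (y-m)/(y-x)" using a unfolding t_def by (simp add: field_simps)
  have "tau ((1-t)*x+t*y) < (1-t)*tau x + t*tau y" by (rule tau_strict) (use a t in auto)
  then have "tau m < (1-t)*tau x + t*tau y" using m by simp
  then show ?thesis unfolding t2 by (simp add: t_def)
qed

lemma wsum: fixes a b m T :: real assumes "a < b" shows "(b-m)/(b-a)*T + (m-a)/(b-a)*T = T"
proof -
  have "(b-m)/(b-a) + (m-a)/(b-a) = 1" using assms by (simp add: add_divide_distrib[symmetric])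
  then have "((b-m)/(b-a) + (m-a)/(b-a))*T = T" by simp
  then show ?thesis by (simp add: distrib_right)
qed

lemma tau_shape: "\<exists>s0. 0<s0 \<and> s0<1 \<and> (\<forall>s. 0<s \<and> s<1 \<longrightarrow> tau s0 \<le> tau s) \<and>
   (\<forall>x y. 0<x \<and> x<y \<and> y\<le>s0 \<longrightarrow> tau y < tau x) \<and>
   (\<forall>x y. s0\<le>x \<and> x<y \<and> y<1 \<longrightarrow> tau x < tau y)"
proof -
  obtain d1 where d1: "d1>0" "d1<1" "\<And>s. 0<s \<Longrightarrow> s<d1 \<Longrightarrow> tau (1/2) < tau s" using tau_big0[of "tau (1/2)"] by blast
  obtain d2 where d2: "d2>0" "d2<1" "\<And>s. 1-d2<s \<Longrightarrow> s<1 \<Longrightarrow> tau (1/2) < tau s" using tau_big1[of "tau (1/2)"] by blast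
  define a where "a = min (d1/2) (1/4)"
  define b where "b = max (1-d2/2) (3/4)"
  have "1 - d2/2 < 1" using d2 by simp
  then have b1: "b < 1" unfolding b_def by simp
  have b2: "3/4 \<le> b" unfolding b_def by simp
  have a1: "a \<le> 1/4" unfolding a_def by simp
  have a2: "0 < a" unfolding a_def using d1 by simp
  have ab: "0<a" "a<1/2" "1/2<b" "b<1" using a1 a2 b1 b2 by auto
  have ta: "tau (1/2) < tau a" using d1 ab unfolding a_def by auto
  have tb: "tau (1/2) < tau b" using d2 ab unfolding b_def by auto
  have "continuous_on {a..b} tau" using tau_cont by (rule continuous_on_subset) (use ab in auto)
  then obtain s0 where s0: "s0 \<in> {a..b}" "\<And>y. y \<in> {a..b} \<Longrightarrow> tau s0 \<le> tau y"
    using continuous_attains_inf[of "{a..b}" tau] ab by auto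
  have h: "tau s0 \<le> tau (1/2)" using s0 ab by auto
  have s01: "0<s0" "s0<1" using s0 ab by auto
  have glob: "tau s0 \<le> tau s" if s: "0<s" "s<1" for s
  proof (cases "s \<in> {a..b}")
    case True then show ?thesis using s0 by auto
  next
    case False
    show ?thesis
    proof (rule ccontr)
      assume c: "\<not> tau s0 \<le> tau s"
      show False
      proof (cases "s < a")
        case True
        have "s < s0" using True s0 by auto
        have "a < s0" using s0(1) ta h by (metis atLeastAtMost_iff order_le_less not_le)
        have "tau a < (s0-a)/(s0-s) * tau s + (a-s)/(s0-s) * tau s0"
          using tau_strict'[of s s0 a] s s01 True \<open>a < s0\<close> by auto
        also have "\<dots> \<le> (s0-a)/(s0-s) * tau s0 + (a-s)/(s0-s) * tau s0"
          using c \<open>a<s0\<close> True by (intro add_right_mono mult_left_mono) auto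
        also have "\<dots> = tau s0" using \<open>s<s0\<close> by (rule wsum)
        finally show False using ta h by linarith
      next
        case False
        then have "b < s" using \<open>s \<notin> {a..b}\<close> by auto
        have "s0 < s" using \<open>b<s\<close> s0 by auto
        have "s0 < b" using s0(1) tb h by (metis atLeastAtMost_iff order_le_less not_le)
        have "tau b < (s-b)/(s-s0) * tau s0 + (b-s0)/(s-s0) * tau s"
          using tau_strict'[of s0 s b] s s01 \<open>b<s\<close> \<open>s0 < b\<close> by auto
        also have "\<dots> \<le> (s-b)/(s-s0) * tau s0 + (b-s0)/(s-s0) * tau s0"
          using c \<open>s0<b\<close> \<open>b<s\<close> by (intro add_left_mono mult_left_mono) auto
        also have "\<dots> = tau s0" using \<open>s0<s\<close> by (rule wsum)
        finally show False using tb h by linarith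
      qed
    qed
  qed
  have strict_min: "tau s0 < tau s" if s: "0<s" "s<1" "s \<noteq> s0" for s
  proof (rule ccontr)
    assume "\<not> tau s0 < tau s"
    then have e: "tau s = tau s0" using glob[OF s(1,2)] by simp
    define m where "m = (s + s0)/2"
    have m: "0<m" "m<1" using s s01 unfolding m_def by auto
    have "tau m < (1 - 1/2)*tau s + (1/2)*tau s0"
      using tau_strict[of s s0 "1/2"] s s01 unfolding m_def by (auto simp: field_simps)
    then have "tau m < tau s0" using e by simp
    then show False using glob[OF m] by simp
  qed
  show ?thesis
  proof (intro exI conjI allI impI)
    fix x y assume xy: "0<x \<and> x<y \<and> y\<le>s0"
    show "tau y < tau x"
    proof (cases "y = s0")
      case True then show ?thesis using strict_min[of x] xy s01 by auto
    next
      case False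
      then have "y < s0" using xy by simp
      have "tau y < (s0-y)/(s0-x) * tau x + (y-x)/(s0-x) * tau s0"
        using tau_strict'[of x s0 y] xy s01 \<open>y<s0\<close> by auto
      also have "\<dots> \<le> (s0-y)/(s0-x) * tau x + (y-x)/(s0-x) * tau x"
        using glob[of x] xy s01 \<open>y<s0\<close> by (intro add_left_mono mult_left_mono) auto
      also have "\<dots> = tau x" using \<open>y<s0\<close> xy by (intro wsum) auto
      finally show ?thesis .
    qed
  next
    fix x y assume xy: "s0\<le>x \<and> x<y \<and> y<1"
    show "tau x < tau y"
    proof (cases "x = s0")
      case True then show ?thesis using strict_min[of y] xy s01 by auto
    next
      case False
      then have "s0 < x" using xy by simp
      have "tau x < (y-x)/(y-s0) * tau s0 + (x-s0)/(y-s0) * tau y"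
        using tau_strict'[of s0 y x] xy s01 \<open>s0<x\<close> by auto
      also have "\<dots> \<le> (y-x)/(y-s0) * tau y + (x-s0)/(y-s0) * tau y"
        using glob[of y] xy s01 \<open>s0<x\<close> by (intro add_right_mono mult_left_mono) auto
      also have "\<dots> = tau y" using \<open>s0<x\<close> xy by (intro wsum) auto
      finally show ?thesis .
    qed
  qed (use s01 glob in auto)
qed

lemma G_deriv: "(G has_real_derivative g x) (at x)"
  unfolding G_def g_def by (auto intro!: derivative_eq_intros simp: algebra_simps power2_eq_square power3_eq_cube)

lemma G_pos: assumes "0 < y" "y \<le> 1" shows "0 < G y"
proof -
  have "G y = y^3 * (4 - 3 * y) / 12" unfolding G_def by (simp add: field_simps power3_eq_cube power4_eq_xxxx)
  moreover have "0 < y^3 * (4 - 3 * y)" using assms by (intro mult_pos_pos) auto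
  ultimately show ?thesis by simp
qed

lemma G_neg: assumes "x < 0" shows "G x < 0"
proof -
  have "G x = x^3 * (4 - 3 * x) / 12" unfolding G_def by (simp add: field_simps power3_eq_cube power4_eq_xxxx)
  moreover have "x^3 < 0" using assms by (simp add: power3_eq_cube mult_neg_pos mult_pos_neg zero_less_mult_iff mult_less_0_iff)
  moreover have "0 < 4 - 3 * x" using assms by simp
  ultimately have "x^3 * (4 - 3 * x) < 0" by (intro mult_neg_pos)
  then show ?thesis using \<open>G x = _\<close> by simp
qed

lemma G_strict: assumes "x < y" "y \<le> 1" "0 < y" shows "G x < G y"
proof (cases "x < 0")
  case True then show ?thesis using G_neg G_pos assms by (meson order.strict_trans)
next
  case False
  obtain z where z: "x < z" "z < y" "G y - G x = (y - x) * g z"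
    using MVT2[of x y G g] assms G_deriv by blast
  have "0 < z" using z False by simp
  then have "0 < g z" unfolding g_def using z assms by simp
  then have "0 < (y - x) * g z" using assms by simp
  then show ?thesis using z by simp
qed

lemma G_0: "G 0 = 0" unfolding G_def by simp

lemma G_mono01: assumes "0 \<le> x" "x < y" "y \<le> 1" shows "G x < G y"
  using G_strict assms by simp

lemma sol_restrict:
  assumes "is_sol lam s u v {a..1}" "a \<le> c" "c \<le> 1"
  shows "is_sol lam s u v {c..1}"
proof -
  have "{c..1} \<subseteq> {a..1}" using assms by auto
  then show ?thesis using assms unfolding is_sol_def
    by (auto intro: DERIV_subset[of _ _ _ "{a..1}"] simp: is_interval_cc)
qed

lemma sol_cont:
  assumes "is_sol lam s u v T"
  shows "continuous_on T u" "continuous_on T v"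
  using assms unfolding is_sol_def by (auto intro: DERIV_continuous_on)

lemma sol_energy:
  assumes "is_sol lam s u v {c..1}" "c \<le> 1" "t \<in> {c..1}"
  shows "(v t)^2 + 2 * lam * G (u t) = 2 * lam * G s"
proof -
  have der: "((\<lambda>t. (v t)^2 + 2 * lam * G (u t)) has_real_derivative 0) (at t within {c..1})"
    if "t \<in> {c..1}" for t
  proof -
    have hu: "(u has_real_derivative v t) (at t within {c..1})" and hv: "(v has_real_derivative (- lam * g (u t))) (at t within {c..1})"
      using assms(1) that unfolding is_sol_def by auto
    have e1: "((\<lambda>t. v t * v t) has_real_derivative (- lam * g (u t)) * v t + v t * (- lam * g (u t))) (at t within {c..1})"
      using DERIV_mult[OF hv hv] by (simp add: algebra_simps)
    have e2: "((\<lambda>t. 2 * lam * G (u t)) has_real_derivative 2 * lam * (g (u t) * v t)) (at t within {c..1})"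
      by (rule DERIV_cmult[OF DERIV_chain'[OF hu G_deriv]])
    have "((\<lambda>t. v t * v t + 2 * lam * G (u t)) has_real_derivative
        ((- lam * g (u t)) * v t + v t * (- lam * g (u t))) + 2 * lam * (g (u t) * v t)) (at t within {c..1})"
      by (rule DERIV_add[OF e1 e2])
    then show ?thesis by (simp add: algebra_simps power2_eq_square)
  qed
  obtain C where C: "\<And>x. x \<in> {c..1} \<Longrightarrow> (v x)^2 + 2 * lam * G (u x) = C"
    using has_field_derivative_zero_constant[of "{c..1}" "\<lambda>t. (v t)^2 + 2 * lam * G (u t)"] der by auto
  have "C = 2 * lam * G s" using C[of 1] assms unfolding is_sol_def by auto
  then show ?thesis using C[OF assms(3)] by simp
qed


lemma sol_mvt:
  assumes "is_sol lam s u v {c..1}" "c \<le> a" "a < b" "b \<le> 1"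
  shows "\<exists>x\<in>{a<..<b}. u b - u a = v x * (b - a)"
proof -
  have "\<exists>x\<in>{a<..<b}. u b - u a = (*) (v x) (b - a)"
  proof (rule mvt_simple[OF assms(3)])
    fix x assume x: "a \<le> x" "x \<le> b"
    then have "(u has_real_derivative v x) (at x within {c..1})" using assms unfolding is_sol_def by auto
    then have "(u has_real_derivative v x) (at x within {a..b})"
      by (rule DERIV_subset) (use assms in auto)
    then show "(u has_derivative (*) (v x)) (at x within {a..b})"
      by (simp add: has_field_derivative_def)
  qed
  then show ?thesis by simp
qed

lemma sol_vpos:
  assumes lam: "0 < lam" and s: "0 < s" "s < 1" and sol: "is_sol lam s u v {c..1}" and t: "c \<le> t" "t < 1"
  shows "0 < v t"
proof (rule ccontr)
  assume "\<not> 0 < v t"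
  then have vt: "v t \<le> 0" by simp
  have c1: "c < 1" using t by simp
  have u1: "u 1 = s" and v1: "v 1 = 0" using sol unfolding is_sol_def by auto
  have "(v has_real_derivative (- lam * g (u 1))) (at 1 within {c..1})"
    using sol c1 unfolding is_sol_def by auto
  moreover have "- lam * g (u 1) < 0" using lam s u1 unfolding g_def by simp
  ultimately obtain d where d: "d > 0" "\<And>h. h > 0 \<Longrightarrow> 1 - h \<in> {c..1} \<Longrightarrow> h < d \<Longrightarrow> v 1 < v (1 - h)"
    using has_real_derivative_neg_dec_left by blast
  have near: "0 < v x" if "c \<le> x" "1 - d < x" "x < 1" for x
    using d(2)[of "1 - x"] that v1 by auto
  have vc: "continuous_on {c..1} v" using sol_cont[OF sol] by simp
  define S where "S = {x \<in> {c..1-d/2}. v x \<le> 0}"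
  have tS: "t \<in> S" unfolding S_def using near[of t] vt t by force
  have "closed S" unfolding S_def
  proof (rule continuous_on_closed_Collect_le)
    show "continuous_on {c..1 - d/2} v" by (rule continuous_on_subset[OF vc]) (use d in auto)
  qed auto
  moreover have "bdd_above S" unfolding S_def by (rule bdd_aboveI[of _ 1]) (use d in auto)
  ultimately have t1S: "Sup S \<in> S" using closed_contains_Sup tS by blast
  define t1 where "t1 = Sup S"
  have t1: "c \<le> t1" "t1 \<le> 1 - d/2" "v t1 \<le> 0" using t1S unfolding S_def t1_def by auto
  have after: "0 < v x" if x: "t1 < x" "x < 1" for x
  proof (cases "x \<le> 1 - d/2")
    case True
    have "x \<notin> S" using x \<open>bdd_above S\<close> cSup_upper unfolding t1_def by fastforce
    then show ?thesis using True x t1 unfolding S_def by auto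
  next
    case False then show ?thesis using near[of x] x t1 by auto
  qed
  have "v t1 = 0"
  proof (rule ccontr)
    assume "v t1 \<noteq> 0"
    then have neg: "v t1 < 0" using t1 by simp
    have "t1 \<in> {c..1}" using t1 d by auto
    then obtain e where e: "e > 0" "\<And>x. x \<in> {c..1} \<Longrightarrow> dist x t1 < e \<Longrightarrow> dist (v x) (v t1) < - v t1"
      using vc neg unfolding continuous_on_iff by (metis neg_0_less_iff_less)
    define x where "x = t1 + min (e/2) ((1 - t1)/2)"
    have "t1 < 1" using t1 d by simp
    then have m: "min (e/2) ((1-t1)/2) \<le> (1-t1)/2" "0 < min (e/2) ((1-t1)/2)" "min (e/2) ((1-t1)/2) \<le> e/2"
      using e by (auto simp: min_def)
    have x1: "t1 < x" unfolding x_def using m(2) by linarith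
    have x2: "x < 1" unfolding x_def using m(1) \<open>t1 < 1\<close> by argo
    have x3: "dist x t1 < e" unfolding x_def dist_real_def using m(2,3) e by simp
    have x: "t1 < x" "x < 1" "x \<in> {c..1}" "dist x t1 < e" using x1 x2 x3 t1 by auto
    have "dist (v x) (v t1) < - v t1" using e(2) x by blast
    then have "v x < 0" by (simp add: dist_real_def)
    then show False using after x by force
  qed
  obtain xi where xi: "xi \<in> {t1<..<1}" "u 1 - u t1 = v xi * (1 - t1)"
    using sol_mvt[OF sol, of t1 1] t1 d by auto
  have "0 < v xi * (1 - t1)" using after[of xi] xi t1 by simp
  then have "u t1 < s" using xi u1 by simp
  then have "G (u t1) < G s" using G_strict s by simp
  moreover have "(v t1)^2 + 2 * lam * G (u t1) = 2 * lam * G s"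
    using sol_energy[OF sol, of t1] t1 d by auto
  ultimately show False using \<open>v t1 = 0\<close> lam by simp
qed

lemma sol_mono:
  assumes lam: "0 < lam" and s: "0 < s" "s < 1" and sol: "is_sol lam s u v {c..1}" and "c \<le> a" "a < b" "b \<le> 1"
  shows "u a < u b"
proof -
  obtain xi where xi: "xi \<in> {a<..<b}" "u b - u a = v xi * (b - a)"
    using sol_mvt[OF sol assms(5-7)] by blast
  have "0 < v xi" using sol_vpos[OF lam s sol, of xi] xi assms by auto
  then have "0 < v xi * (b - a)" using assms by simp
  then show ?thesis using xi by simp
qed


lemma Psi_cont: assumes "0<s" "s<1" shows "continuous_on {-1..} (Psi s)"
  by (rule has_real_derivative_imp_continuous_on[OF Psi_deriv[OF assms]]) auto

lemma Psi_diff: assumes "0<s" "s<1" "-2 \<le> a" "a \<le> b" shows "Psi s b - Psi s a = integral {a..b} (kk s)"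
proof -
  have "kk s integrable_on {-2..b}" using kk_cont[OF assms(1,2)] integrable_continuous_interval by blast
  then have "integral {-2..a} (kk s) + integral {a..b} (kk s) = integral {-2..b} (kk s)"
    using Henstock_Kurzweil_Integration.integral_combine[of "-2" a b "kk s"] assms by auto
  then show ?thesis unfolding Psi_def by simp
qed

lemma tau_Psi: assumes "0<s" "s<1" shows "tau s = Psi s 1 - Psi s 0"
  using Psi_diff[OF assms, of 0 1] unfolding tau_def by simp

lemma Psi_strict: assumes "0<s" "s<1" "-1 \<le> a" "a < b" shows "Psi s a < Psi s b"
  by (rule DERIV_pos_imp_increasing[OF assms(4)]) (use Psi_deriv[OF assms(1,2)] kk_pos[OF assms(1,2)] assms in force)

lemma sol_time:
  assumes lam: "0 < lam" and s: "0 < s" "s < 1" and sol: "is_sol lam s u v {c..1}" and c: "c < 1" and uc: "0 \<le> u c"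
    and t: "t \<in> {c..1}"
  shows "0 \<le> v t \<and> (\<exists>z. 0 \<le> z \<and> z \<le> 1 \<and> u t = s * (1 - z^2) \<and> Psi s z - Psi s 0 = sqrt lam * (1 - t))"
proof -
  have u1: "u 1 = s" and v1: "v 1 = 0" using sol unfolding is_sol_def by auto
  have ule: "u x \<le> s" if "x \<in> {c..1}" for x
    using sol_mono[OF lam s sol, of x 1] that u1 by (cases "x = 1") auto
  have ult: "u x < s" if "x \<in> {c..<1}" for x
    using sol_mono[OF lam s sol, of x 1] that u1 by auto
  have uge: "0 \<le> u x" if "x \<in> {c..1}" for x
    using sol_mono[OF lam s sol, of c x] that uc by (cases "x = c") auto
  define Z where "Z x = sqrt (1 - u x / s)" for x
  have Zr: "0 \<le> Z x" "Z x \<le> 1" if "x \<in> {c..1}" for x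
    unfolding Z_def using uge[OF that] ule[OF that] s by (auto simp: field_simps)
  have uZ: "u x = s * (1 - (Z x)^2)" if "x \<in> {c..1}" for x
  proof -
    have "0 \<le> 1 - u x / s" using ule[OF that] s by (simp add: field_simps)
    then have "(Z x)^2 = 1 - u x / s" unfolding Z_def by simp
    then show ?thesis using s by (simp add: field_simps)
  qed
  have Zpos: "0 < Z x" if "x \<in> {c..<1}" for x
    unfolding Z_def using ult[OF that] s by (simp add: field_simps)
  have vnn: "0 \<le> v x" if "x \<in> {c..1}" for x
    using sol_vpos[OF lam s sol, of x] that v1 by (cases "x = 1") auto
  have vZ: "v x = sqrt lam * s * Z x * sqrt (Pq s (Z x))" if x: "x \<in> {c..1}" for x
  proof -
    have "(v x)^2 = 2 * lam * G s - 2 * lam * G (u x)" using sol_energy[OF sol _ x] c by simp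
    also have "\<dots> = 2 * lam * (G s - G (u x))" by (simp add: right_diff_distrib)
    also have "\<dots> = 2 * lam * (s^2 * (Z x)^2 * Pq s (Z x) / 2)" using G_diff[of s "Z x"] uZ[OF x] by simp
    also have "\<dots> = (sqrt lam * s * Z x * sqrt (Pq s (Z x)))^2"
      using lam Pq_pos[OF s, of "Z x"] by (simp add: power_mult_distrib)
    finally have "(v x)^2 = (sqrt lam * s * Z x * sqrt (Pq s (Z x)))^2" .
    moreover have "0 \<le> sqrt lam * s * Z x * sqrt (Pq s (Z x))" using Zr[OF x] s Pq_pos[OF s, of "Z x"] lam by simp
    ultimately show ?thesis using vnn[OF x] by (simp add: power2_eq_iff_nonneg)
  qed
  define F where "F x = Psi s (Z x) + sqrt lam * x" for x
  have Fder: "(F has_real_derivative 0) (at x within {c..<1})" if x: "x \<in> {c..<1}" for x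
  proof -
    have x': "x \<in> {c..1}" using x by auto
    have "(u has_real_derivative v x) (at x within {c..1})"
      using sol x' unfolding is_sol_def by auto
    then have hu: "(u has_real_derivative v x) (at x within {c..<1})"
      by (rule DERIV_subset) auto
    have pos: "0 < 1 - u x / s" using ult[OF x] s by (simp add: field_simps)
    have "((\<lambda>x. 1 - u x / s) has_real_derivative (0 - v x / s)) (at x within {c..<1})"
      by (rule DERIV_diff[OF DERIV_const DERIV_cdivide[OF hu]])
    then have h1: "((\<lambda>x. 1 - u x / s) has_real_derivative (- (v x / s))) (at x within {c..<1})"
      by simp
    have hZ: "(Z has_real_derivative (inverse (sqrt (1 - u x / s)) / 2 * (- (v x / s)))) (at x within {c..<1})"
      unfolding Z_def by (rule DERIV_chain'[OF h1 DERIV_real_sqrt[OF pos]])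
    have hP: "DERIV (Psi s) (Z x) :> kk s (Z x)" using Psi_deriv[OF s] Zr[OF x'] by simp
    have hF: "(F has_real_derivative (kk s (Z x) * (inverse (sqrt (1 - u x / s)) / 2 * (- (v x / s))) + sqrt lam * 1)) (at x within {c..<1})"
      unfolding F_def by (intro DERIV_add DERIV_chain'[OF hZ hP] DERIV_cmult DERIV_ident)
    have Q: "0 < sqrt (Pq s (Z x))" using Pq_pos[OF s] by simp
    have "kk s (Z x) * (inverse (sqrt (1 - u x / s)) / 2 * (- (v x / s))) + sqrt lam * 1
       = (2 / sqrt (Pq s (Z x))) * (inverse (Z x) / 2 * (- (sqrt lam * s * Z x * sqrt (Pq s (Z x)) / s))) + sqrt lam"
      unfolding kk_def vZ[OF x'] Z_def by simp
    also have "\<dots> = 0" using Q Zpos[OF x] s by (simp add: field_simps)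
    finally show ?thesis using hF by simp
  qed
  obtain C where C: "\<And>x. x \<in> {c..<1} \<Longrightarrow> F x = C"
    using has_field_derivative_zero_constant[of "{c..<1}" F] Fder by auto
  have Zc: "continuous_on {c..1} Z" unfolding Z_def using sol_cont[OF sol] s by (intro continuous_intros) auto
  have "continuous_on {c..1} (\<lambda>x. Psi s (Z x))"
  proof (rule continuous_on_compose2[OF Psi_cont[OF s] Zc])
    show "Z ` {c..1} \<subseteq> {-1..}"
    proof
      fix y assume "y \<in> Z ` {c..1}"
      then obtain x where "x \<in> {c..1}" "y = Z x" by auto
      then show "y \<in> {-1..}" using Zr[of x] by auto
    qed
  qed
  then have Fc: "continuous_on (closure {c..<1}) F" unfolding F_def using c by (auto intro!: continuous_intros)
  have F1: "F 1 = C" by (rule continuous_constant_on_closure[OF Fc C]) (use c in auto)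
  have Z1: "Z 1 = 0" unfolding Z_def using u1 s by simp
  have Ft: "F t = C"
  proof (cases "t = 1")
    case True then show ?thesis using F1 by simp
  next
    case False then show ?thesis using C t by auto
  qed
  have "Psi s (Z t) - Psi s 0 = sqrt lam * (1 - t)"
    using Ft F1 Z1 unfolding F_def by (simp add: algebra_simps)
  then show ?thesis using vnn[OF t] Zr[OF t] uZ[OF t] by blast
qed

definition Pd :: "real \<Rightarrow> real \<Rightarrow> real" where
  "Pd s z = 2 * s * (- 2 * z * (1 + 2 * cw z) / 3 + s * z * (1 + 2 * cw z + 3 * (cw z)^2) / 2)"

lemma Pq_poly: "Pq s z = 2 * s * ((1 + (1 - z^2) + (1 - z^2)^2)/3 - s * ((1 + (1 - z^2))*(1 + (1 - z^2)^2)/4))"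
  unfolding Pq_def ca_def cb_def cw_def by simp

lemma Pq_deriv: "(Pq s has_real_derivative Pd s z) (at z)"
proof -
  have "((\<lambda>z. 2 * s * ((1 + (1 - z^2) + (1 - z^2)^2)/3 - s * ((1 + (1 - z^2))*(1 + (1 - z^2)^2)/4))) has_real_derivative Pd s z) (at z)"
    unfolding Pd_def cw_def
    by (auto intro!: derivative_eq_intros simp: field_simps power2_eq_square)
  then show ?thesis unfolding Pq_poly[abs_def] by simp
qed

lemma Pq_ident: "s * (Pq s z + z * Pd s z / 2) / 2 = g (s * (1 - z^2))"
  unfolding Pq_def Pd_def ca_def cb_def cw_def g_def by (simp add: field_simps) algebra


lemma Psi_inj: assumes "0<s" "s<1" shows "inj_on (Psi s) {-1..}"
proof (rule inj_onI)
  fix x y assume xy: "x \<in> {-1..}" "y \<in> {-1..}" "Psi s x = Psi s y"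
  show "x = y"
  proof (rule ccontr)
    assume "x \<noteq> y"
    then have "x < y \<or> y < x" by auto
    then show False using Psi_strict[OF assms] xy by (metis atLeast_iff less_irrefl)
  qed
qed

lemma Psi_le_iff: assumes "0<s" "s<1" "-1 \<le> a" "-1 \<le> b" shows "Psi s a \<le> Psi s b \<longleftrightarrow> a \<le> b"
  using Psi_strict[OF assms(1,2)] assms by (metis linorder_not_le order_le_less)

lemma sol_exists:
  assumes lam: "0 < lam" and s: "0 < s" "s < 1"
  shows "\<exists>u v. is_sol lam s u v {1 - tau s / sqrt lam..1} \<and> u (1 - tau s / sqrt lam) = 0 \<and> v (1 - tau s / sqrt lam) > 0"
proof -
  define T where "T = tau s / sqrt lam"
  define P where "P = Psi s"
  have T: "0 < T" unfolding T_def using tau_pos[OF s] lam by simp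
  have sT: "sqrt lam * T = P 1 - P 0" unfolding T_def P_def using tau_Psi[OF s] lam by simp
  define psi where "psi = inv_into {-1..2} P"
  have Pc: "continuous_on {-1..2} P" unfolding P_def by (rule continuous_on_subset[OF Psi_cont[OF s]]) auto
  have Pinj: "inj_on P {-1..2}" unfolding P_def by (rule inj_on_subset[OF Psi_inj[OF s]]) auto
  have img: "P ` {-1..2} = {P (-1)..P 2}"
  proof
    show "P ` {-1..2} \<subseteq> {P (-1)..P 2}" unfolding P_def using Psi_le_iff[OF s] by auto
    show "{P (-1)..P 2} \<subseteq> P ` {-1..2}"
    proof
      fix y assume "y \<in> {P (-1)..P 2}"
      then obtain x where "-1 \<le> x" "x \<le> 2" "P x = y" using IVT'[of P "-1" y 2] Pc by auto
      then show "y \<in> P ` {-1..2}" by auto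
    qed
  qed
  have Ppsi: "P (psi y) = y" if "y \<in> {P (-1)..P 2}" for y
    unfolding psi_def using that img by (metis f_inv_into_f)
  have psiP: "psi (P x) = x" if "x \<in> {-1..2}" for x
    unfolding psi_def using that Pinj by (simp add: inv_into_f_f)
  have psir: "psi y \<in> {-1..2}" if "y \<in> {P (-1)..P 2}" for y
    unfolding psi_def using that img by (metis inv_into_into)
  have psic: "continuous_on {P (-1)..P 2} psi"
    using continuous_on_inv[OF Pc compact_Icc, of psi] psiP img by auto
  have psider: "DERIV psi y :> inverse (kk s (psi y))" if y: "P (-1) < y" "y < P 2" for y
  proof (rule DERIV_inverse_function[where f=P and a="P (-1)" and b="P 2"])
    show "DERIV P (psi y) :> kk s (psi y)" unfolding P_def using Psi_deriv[OF s] psir[of y] y by auto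
    show "kk s (psi y) \<noteq> 0" using kk_pos[OF s] by (metis less_irrefl)
    show "P (-1) < y" "y < P 2" by (fact y)+
    show "\<And>y. P (- 1) < y \<Longrightarrow> y < P 2 \<Longrightarrow> P (psi y) = y" using Ppsi by auto
    show "isCont psi y" using continuous_on_interior[OF psic, of y] y by simp
  qed
  have Pm1: "P (-1) < P 0" and P12: "P 1 < P 2" unfolding P_def using Psi_strict[OF s] by auto
  have P01: "P 0 < P 1" unfolding P_def using Psi_strict[OF s] by auto
  define Y where "Y t = P 0 + sqrt lam * (1 - t)" for t
  define z where "z t = psi (Y t)" for t
  define u where "u t = s * (1 - (z t)^2)" for t
  define v where "v t = sqrt lam * s * z t * sqrt (Pq s (z t))" for t
  have Yr: "P 0 \<le> Y t \<and> Y t \<le> P 1" if "t \<in> {1-T..1}" for t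
  proof -
    have "sqrt lam * (1 - t) \<le> sqrt lam * T" using that lam by (intro mult_left_mono) auto
    then show ?thesis unfolding Y_def using that lam sT by auto
  qed
  have zr: "0 \<le> z t \<and> z t \<le> 1" if t: "t \<in> {1-T..1}" for t
  proof -
    have Y: "Y t \<in> {P (-1)..P 2}" using Yr[OF t] Pm1 P12 by auto
    have "P 0 \<le> P (z t)" "P (z t) \<le> P 1" using Yr[OF t] Ppsi[OF Y] unfolding z_def by auto
    moreover have "-1 \<le> z t" using psir[OF Y] unfolding z_def by auto
    ultimately show ?thesis unfolding P_def using Psi_le_iff[OF s] by auto
  qed
  have Q: "0 < sqrt (Pq s x)" for x using Pq_pos[OF s] by simp
  have zder: "(z has_real_derivative (- sqrt lam * sqrt (Pq s (z t)) / 2)) (at t)" if t: "t \<in> {1-T..1}" for t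
  proof -
    have hY: "(Y has_real_derivative - sqrt lam) (at t)" unfolding Y_def
      by (auto intro!: derivative_eq_intros)
    have Yo: "P (-1) < Y t" "Y t < P 2" using Yr[OF t] Pm1 P12 by auto
    have "(z has_real_derivative inverse (kk s (psi (Y t))) * (- sqrt lam)) (at t)"
      unfolding z_def by (rule DERIV_chain'[OF hY psider[OF Yo]])
    then show ?thesis unfolding kk_def z_def using Q by (simp add: field_simps)
  qed
  have uder: "(u has_real_derivative v t) (at t)" if t: "t \<in> {1-T..1}" for t
  proof -
    have "(u has_real_derivative s * (0 - 2 * z t * (- sqrt lam * sqrt (Pq s (z t)) / 2))) (at t)"
      unfolding u_def by (auto intro!: derivative_eq_intros zder[OF t] simp: power2_eq_square)
    then show ?thesis unfolding v_def by (simp add: algebra_simps)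
  qed
  have vder: "(v has_real_derivative (- lam * g (u t))) (at t)" if t: "t \<in> {1-T..1}" for t
  proof -
    define Qt where "Qt = sqrt (Pq s (z t))"
    have Qt: "0 < Qt" "Qt^2 = Pq s (z t)" unfolding Qt_def using Pq_pos[OF s, of "z t"] by auto
    have hQ: "((\<lambda>x. sqrt (Pq s x)) has_real_derivative inverse (sqrt (Pq s (z t))) / 2 * Pd s (z t)) (at (z t))"
      by (rule DERIV_chain'[OF Pq_deriv DERIV_real_sqrt[OF Pq_pos[OF s]]])
    have hQz: "((\<lambda>t. sqrt (Pq s (z t))) has_real_derivative (inverse Qt / 2 * Pd s (z t)) * (- sqrt lam * Qt / 2)) (at t)"
      unfolding Qt_def by (rule DERIV_chain'[OF zder[OF t] hQ])
    have hm: "((\<lambda>t. z t * sqrt (Pq s (z t))) has_real_derivative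
       z t * ((inverse Qt / 2 * Pd s (z t)) * (- sqrt lam * Qt / 2)) + (- sqrt lam * Qt / 2) * Qt) (at t)"
      using DERIV_mult'[OF zder[OF t] hQz] unfolding Qt_def .
    have A: "((\<lambda>t. (sqrt lam * s) * (z t * sqrt (Pq s (z t)))) has_real_derivative
       (sqrt lam * s) * ((- sqrt lam * Qt / 2) * Qt + z t * ((inverse Qt / 2 * Pd s (z t)) * (- sqrt lam * Qt / 2)))) (at t)"
      using DERIV_cmult[OF hm, of "sqrt lam * s"] by (simp only: add.commute)
    have B: "(sqrt lam * s) * ((- sqrt lam * Qt / 2) * Qt + z t * ((inverse Qt / 2 * Pd s (z t)) * (- sqrt lam * Qt / 2)))
        = - lam * (s * (Qt^2 + z t * Pd s (z t) / 2) / 2)"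
    proof -
      have e1: "\<And>X. sqrt lam * (sqrt lam * X) = lam * X" using lam by (simp add: mult.assoc[symmetric])
      have e2: "\<And>X. Qt * (Qt * X) = Pq s (z t) * X" using Qt(2) by (simp add: mult.assoc[symmetric] power2_eq_square)
      show ?thesis using Qt lam by (simp add: field_simps power2_eq_square e1 e2)
    qed
    have C: "s * (Qt^2 + z t * Pd s (z t) / 2) / 2 = g (u t)"
      unfolding u_def using Pq_ident[of s "z t"] Qt by simp
    have vv: "v = (\<lambda>t. (sqrt lam * s) * (z t * sqrt (Pq s (z t))))" unfolding v_def by (simp add: fun_eq_iff mult.assoc)
    show ?thesis using A unfolding B C vv .
  qed
  have z1: "z 1 = 0" unfolding z_def Y_def using psiP[of 0] by simp
  have zT: "z (1 - T) = 1" unfolding z_def Y_def using psiP[of 1] sT by simp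
  have "is_sol lam s u v {1-T..1}"
    unfolding is_sol_def
  proof (intro conjI ballI)
    show "is_interval {1-T..1}" by (simp add: is_interval_cc)
    show "1 \<in> {1-T..1}" using T by simp
    show "u 1 = s" unfolding u_def z1 by simp
    show "v 1 = 0" unfolding v_def z1 by simp
    fix t assume t: "t \<in> {1-T..1}"
    show "(u has_real_derivative v t) (at t within {1-T..1})" using uder[OF t] by (rule has_field_derivative_at_within)
    show "(v has_real_derivative - lam * g (u t)) (at t within {1-T..1})" using vder[OF t] by (rule has_field_derivative_at_within)
  qed
  moreover have "u (1 - T) = 0" unfolding u_def zT by simp
  moreover have "v (1 - T) > 0" unfolding v_def zT using lam s Q by simp
  ultimately show ?thesis unfolding T_def by blast
qed

lemma T0_unique:
  assumes lam: "0 < lam" and s: "0 < s" "s < 1" and t: "0 < t" and sol: "is_sol lam s u v {1-t..1}" and u0: "u (1-t) = 0"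
  shows "t = tau s / sqrt lam"
proof -
  obtain z where z: "0 \<le> z" "z \<le> 1" "u (1-t) = s * (1 - z^2)" "Psi s z - Psi s 0 = sqrt lam * (1 - (1-t))"
    using sol_time[OF lam s sol _ _, of "1-t"] t u0 by auto
  have "z^2 = 1" using z(3) u0 s by simp
  then have "z = 1" using z(1) by (simp add: power2_eq_1_iff)
  then have "tau s = sqrt lam * t" using z(4) tau_Psi[OF s] by simp
  then show ?thesis using lam by simp
qed

lemma T0hat_eq:
  assumes lam: "0 < lam" and s: "0 < s" "s < 1"
  shows "T0hat lam s = tau s / sqrt lam"
proof -
  define T where "T = tau s / sqrt lam"
  have T: "0 < T" unfolding T_def using tau_pos[OF s] lam by simp
  have "{t. t > 0 \<and> (\<exists>u v. is_sol lam s u v {1-t..1} \<and> u (1-t) = 0 \<and> v (1-t) > 0)} = {T}"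
  proof
    show "{t. t > 0 \<and> (\<exists>u v. is_sol lam s u v {1-t..1} \<and> u (1-t) = 0 \<and> v (1-t) > 0)} \<subseteq> {T}"
      using T0_unique[OF lam s] unfolding T_def by blast
    show "{T} \<subseteq> {t. t > 0 \<and> (\<exists>u v. is_sol lam s u v {1-t..1} \<and> u (1-t) = 0 \<and> v (1-t) > 0)}"
      using sol_exists[OF lam s] T unfolding T_def by blast
  qed
  then show ?thesis unfolding T0hat_def T_def by simp
qed

lemma I1_iff:
  assumes lam: "0 < lam"
  shows "s \<in> I1 lam \<sigma> \<longleftrightarrow> 0 < s \<and> s < 1 \<and> sqrt lam * \<sigma> < tau s"
proof -
  have "sqrt lam * \<sigma> < tau s \<longleftrightarrow> \<sigma> < tau s / sqrt lam" using lam by (simp add: field_simps)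
  then show ?thesis unfolding I1_def using T0hat_eq[OF lam] by auto
qed

lemma Gamma1_facts:
  assumes lam: "0 < lam" and sig: "0 < \<sigma>" and p: "(x, y) \<in> Gamma1 lam \<sigma>"
  shows "\<exists>s. 0 < s \<and> s < 1 \<and> sqrt lam * \<sigma> < tau s \<and> 0 \<le> y \<and> y^2 + 2 * lam * G x = 2 * lam * G s \<and>
     (\<exists>z. 0 \<le> z \<and> z \<le> 1 \<and> x = s * (1 - z^2) \<and> Psi s z - Psi s 0 = sqrt lam * \<sigma>)"
proof -
  obtain s u v where sI: "s \<in> I1 lam \<sigma>" and sol: "is_sol lam s u v {1-\<sigma>..1}" and xy: "x = u (1-\<sigma>)" "y = v (1-\<sigma>)"
    using p unfolding Gamma1_def by auto
  have s: "0 < s" "s < 1" "sqrt lam * \<sigma> < tau s" using sI I1_iff[OF lam] by auto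
  have T: "\<sigma> < tau s / sqrt lam" using s lam by (simp add: field_simps)
  have u1: "u 1 = s" using sol unfolding is_sol_def by auto
  have uc: "0 \<le> u (1-\<sigma>)"
  proof (rule ccontr)
    assume "\<not> 0 \<le> u (1-\<sigma>)"
    then have neg: "u (1-\<sigma>) \<le> 0" by simp
    obtain t' where t': "1-\<sigma> \<le> t'" "t' \<le> 1" "u t' = 0"
      using IVT'[of u "1-\<sigma>" 0 1] neg u1 s sig sol_cont[OF sol] by auto
    have "t' \<noteq> 1" using t' u1 s by auto
    then have t'1: "t' < 1" using t' by simp
    have sol': "is_sol lam s u v {1-(1-t')..1}" using sol_restrict[OF sol t'(1) t'(2)] by simp
    have "1 - t' = tau s / sqrt lam" by (rule T0_unique[OF lam s(1,2) _ sol']) (use t'1 t' in auto)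
    then show False using T t' by simp
  qed
  obtain z where z: "0 \<le> v (1-\<sigma>)" "0 \<le> z" "z \<le> 1" "u (1-\<sigma>) = s * (1 - z^2)" "Psi s z - Psi s 0 = sqrt lam * (1 - (1-\<sigma>))"
    using sol_time[OF lam s(1,2) sol _ uc, of "1-\<sigma>"] sig by auto
  have "(v (1-\<sigma>))^2 + 2 * lam * G (u (1-\<sigma>)) = 2 * lam * G s" using sol_energy[OF sol, of "1-\<sigma>"] sig by simp
  then show ?thesis using s z xy by auto
qed

lemma Gamma1_exists:
  assumes lam: "0 < lam" and sig: "0 < \<sigma>" and s: "0 < s" "s < 1" and st: "sqrt lam * \<sigma> < tau s"
  shows "\<exists>x y. (x, y) \<in> Gamma1 lam \<sigma> \<and> 0 \<le> y \<and> y^2 + 2 * lam * G x = 2 * lam * G s \<and>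
     (\<exists>z. 0 \<le> z \<and> z \<le> 1 \<and> x = s * (1 - z^2) \<and> Psi s z - Psi s 0 = sqrt lam * \<sigma>)"
proof -
  define T where "T = tau s / sqrt lam"
  have T: "\<sigma> < T" unfolding T_def using st lam by (simp add: field_simps)
  obtain u v where sol: "is_sol lam s u v {1-T..1}" and uT: "u (1-T) = 0"
    using sol_exists[OF lam s] unfolding T_def by blast
  have sol': "is_sol lam s u v {1-\<sigma>..1}" by (rule sol_restrict[OF sol]) (use T sig in auto)
  have uc: "0 \<le> u (1-\<sigma>)" using sol_mono[OF lam s sol, of "1-T" "1-\<sigma>"] uT T sig by auto
  obtain z where z: "0 \<le> v (1-\<sigma>)" "0 \<le> z" "z \<le> 1" "u (1-\<sigma>) = s * (1 - z^2)" "Psi s z - Psi s 0 = sqrt lam * (1 - (1-\<sigma>))"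
    using sol_time[OF lam s sol' _ uc, of "1-\<sigma>"] sig by auto
  have en: "(v (1-\<sigma>))^2 + 2 * lam * G (u (1-\<sigma>)) = 2 * lam * G s" using sol_energy[OF sol', of "1-\<sigma>"] sig by simp
  have "s \<in> I1 lam \<sigma>" using I1_iff[OF lam] s st by auto
  then have "(u (1-\<sigma>), v (1-\<sigma>)) \<in> Gamma1 lam \<sigma>" unfolding Gamma1_def using sol' by blast
  then show ?thesis using z en by auto
qed

lemma Psi_gap_lower: assumes "0<s" "s<1" "0 \<le> a" "a \<le> b" "b \<le> 1" shows "b - a \<le> Psi s b - Psi s a"
proof -
  have "integral {a..b} (\<lambda>z::real. 1::real) \<le> integral {a..b} (kk s)"
  proof (rule Henstock_Kurzweil_Integration.integral_le)
    show "kk s integrable_on {a..b}" using kk_cont[OF assms(1,2)] integrable_continuous_interval by blast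
    show "(\<lambda>z::real. 1::real) integrable_on {a..b}" by (intro integrable_continuous_interval continuous_intros)
    show "\<And>x. x \<in> {a..b} \<Longrightarrow> 1 \<le> kk s x" using kk_ge1[OF assms(1,2)] assms by auto
  qed
  then show ?thesis using Psi_diff[OF assms(1,2), of a b] assms by simp
qed

lemma Psi_gap_upper: assumes "0<s" "s<1" "1/2 \<le> a" "a \<le> b" "b \<le> 1"
  shows "Psi s b - Psi s a \<le> 2 / sqrt (s/24) * (b - a)"
proof -
  have "integral {a..b} (kk s) \<le> integral {a..b} (\<lambda>z::real. 2 / sqrt (s/24))"
  proof (rule Henstock_Kurzweil_Integration.integral_le)
    show "kk s integrable_on {a..b}" using kk_cont[OF assms(1,2)] integrable_continuous_interval by blast
    show "(\<lambda>z::real. 2 / sqrt (s/24)) integrable_on {a..b}" by (intro integrable_continuous_interval continuous_intros)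
    show "\<And>x. x \<in> {a..b} \<Longrightarrow> kk s x \<le> 2 / sqrt (s/24)" using kk_upper[OF assms(1,2)] assms by auto
  qed
  then show ?thesis using Psi_diff[OF assms(1,2), of a b] assms by (simp add: mult.commute)
qed

lemma G_tendsto: "X \<longlonglongrightarrow> l \<Longrightarrow> (\<lambda>n. G (X n)) \<longlonglongrightarrow> G l"
  unfolding G_def by (intro tendsto_intros) auto

lemma tau_isCont: assumes "0<s" "s<1" shows "isCont tau s"
  using continuous_on_interior[OF tau_cont, of s] assms by (simp add: interior_open)

lemma closure_sup:
  assumes lam: "0 < lam" and sig: "0 < \<sigma>" and s: "0 < s" "s < 1" and ts: "tau s = sqrt lam * \<sigma>"
    and S: "\<And>n. 0 < S n \<and> S n < 1 \<and> sqrt lam * \<sigma> < tau (S n)" and Sl: "S \<longlonglongrightarrow> s"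
  shows "(0, sqrt (2 * lam * G s)) \<in> closure (Gamma1 lam \<sigma>)"
proof -
  have "\<forall>n. \<exists>p. p \<in> Gamma1 lam \<sigma> \<and> 0 \<le> snd p \<and> (snd p)^2 + 2 * lam * G (fst p) = 2 * lam * G (S n) \<and>
     (\<exists>z. 0 \<le> z \<and> z \<le> 1 \<and> fst p = S n * (1 - z^2) \<and> Psi (S n) z - Psi (S n) 0 = sqrt lam * \<sigma>)"
  proof
    fix n
    obtain x y where "(x, y) \<in> Gamma1 lam \<sigma> \<and> 0 \<le> y \<and> y^2 + 2 * lam * G x = 2 * lam * G (S n) \<and>
     (\<exists>z. 0 \<le> z \<and> z \<le> 1 \<and> x = S n * (1 - z^2) \<and> Psi (S n) z - Psi (S n) 0 = sqrt lam * \<sigma>)"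
      using Gamma1_exists[OF lam sig, of "S n"] S[of n] by blast
    then show "\<exists>p. p \<in> Gamma1 lam \<sigma> \<and> 0 \<le> snd p \<and> (snd p)^2 + 2 * lam * G (fst p) = 2 * lam * G (S n) \<and>
     (\<exists>z. 0 \<le> z \<and> z \<le> 1 \<and> fst p = S n * (1 - z^2) \<and> Psi (S n) z - Psi (S n) 0 = sqrt lam * \<sigma>)"
      by (intro exI[of _ "(x,y)"]) auto
  qed
  then obtain p where p: "\<And>n. p n \<in> Gamma1 lam \<sigma> \<and> 0 \<le> snd (p n) \<and> (snd (p n))^2 + 2 * lam * G (fst (p n)) = 2 * lam * G (S n) \<and>
     (\<exists>z. 0 \<le> z \<and> z \<le> 1 \<and> fst (p n) = S n * (1 - z^2) \<and> Psi (S n) z - Psi (S n) 0 = sqrt lam * \<sigma>)"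
    by metis
  then obtain Z where Z: "\<And>n. 0 \<le> Z n \<and> Z n \<le> 1 \<and> fst (p n) = S n * (1 - (Z n)^2) \<and> Psi (S n) (Z n) - Psi (S n) 0 = sqrt lam * \<sigma>"
    by metis
  have gap: "1 - Z n \<le> tau (S n) - sqrt lam * \<sigma>" for n
  proof -
    have "1 - Z n \<le> Psi (S n) 1 - Psi (S n) (Z n)" using Psi_gap_lower[of "S n" "Z n" 1] S[of n] Z[of n] by auto
    then show ?thesis using tau_Psi[of "S n"] S[of n] Z[of n] by simp
  qed
  have "(\<lambda>n. tau (S n)) \<longlonglongrightarrow> tau s" using isCont_tendsto_compose[OF tau_isCont[OF s] Sl] .
  then have r0: "(\<lambda>n. tau (S n) - sqrt lam * \<sigma>) \<longlonglongrightarrow> 0" using ts by (intro tendsto_eq_intros) auto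
  have "(\<lambda>n. 1 - Z n) \<longlonglongrightarrow> 0"
    by (rule tendsto_sandwich[OF _ _ tendsto_const r0]) (use gap Z in auto)
  then have Z1: "Z \<longlonglongrightarrow> 1" using tendsto_diff[OF tendsto_const[of 1], of "\<lambda>n. 1 - Z n" 0] by simp
  have fx: "(\<lambda>n. fst (p n)) \<longlonglongrightarrow> 0"
  proof -
    have "(\<lambda>n. S n * (1 - (Z n)^2)) \<longlonglongrightarrow> s * (1 - 1^2)" by (intro tendsto_intros Sl Z1)
    then show ?thesis using Z by simp
  qed
  have sy: "snd (p n) = sqrt (2 * lam * (G (S n) - G (fst (p n))))" for n
  proof -
    have "(snd (p n))^2 = 2 * lam * G (S n) - 2 * lam * G (fst (p n))" using p[of n] by simp
    also have "\<dots> = 2 * lam * (G (S n) - G (fst (p n)))" by (simp add: right_diff_distrib)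
    finally show ?thesis using p[of n] by (metis real_sqrt_unique)
  qed
  have "(\<lambda>n. sqrt (2 * lam * (G (S n) - G (fst (p n))))) \<longlonglongrightarrow> sqrt (2 * lam * (G s - G 0))"
    by (intro tendsto_intros G_tendsto Sl fx)
  then have fy: "(\<lambda>n. snd (p n)) \<longlonglongrightarrow> sqrt (2 * lam * G s)" using sy G_0 by simp
  have "(\<lambda>n. (fst (p n), snd (p n))) \<longlonglongrightarrow> (0, sqrt (2 * lam * G s))" by (rule tendsto_Pair[OF fx fy])
  then have "p \<longlonglongrightarrow> (0, sqrt (2 * lam * G s))" by simp
  then show ?thesis unfolding closure_sequential using p by blast
qed


lemma closure_sub:
  assumes lam: "0 < lam" and sig: "0 < \<sigma>" and xi: "0 < \<xi>" and cl: "(0, \<xi>) \<in> closure (Gamma1 lam \<sigma>)"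
  shows "\<exists>s. 0 < s \<and> s < 1 \<and> tau s = sqrt lam * \<sigma> \<and> \<xi> = sqrt (2 * lam * G s)"
proof -
  obtain p where p: "\<And>n. p n \<in> Gamma1 lam \<sigma>" and pl: "p \<longlonglongrightarrow> (0, \<xi>)"
    using cl unfolding closure_sequential by blast
  have "\<forall>n. \<exists>s. 0 < s \<and> s < 1 \<and> sqrt lam * \<sigma> < tau s \<and> 0 \<le> snd (p n) \<and> (snd (p n))^2 + 2 * lam * G (fst (p n)) = 2 * lam * G s \<and>
     (\<exists>z. 0 \<le> z \<and> z \<le> 1 \<and> fst (p n) = s * (1 - z^2) \<and> Psi s z - Psi s 0 = sqrt lam * \<sigma>)"
  proof
    fix n
    have "(fst (p n), snd (p n)) \<in> Gamma1 lam \<sigma>" using p[of n] by simp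
    then show "\<exists>s. 0 < s \<and> s < 1 \<and> sqrt lam * \<sigma> < tau s \<and> 0 \<le> snd (p n) \<and> (snd (p n))^2 + 2 * lam * G (fst (p n)) = 2 * lam * G s \<and>
     (\<exists>z. 0 \<le> z \<and> z \<le> 1 \<and> fst (p n) = s * (1 - z^2) \<and> Psi s z - Psi s 0 = sqrt lam * \<sigma>)"
      by (rule Gamma1_facts[OF lam sig])
  qed
  then obtain S where S: "\<And>n. 0 < S n \<and> S n < 1 \<and> sqrt lam * \<sigma> < tau (S n) \<and> 0 \<le> snd (p n) \<and> (snd (p n))^2 + 2 * lam * G (fst (p n)) = 2 * lam * G (S n) \<and>
     (\<exists>z. 0 \<le> z \<and> z \<le> 1 \<and> fst (p n) = S n * (1 - z^2) \<and> Psi (S n) z - Psi (S n) 0 = sqrt lam * \<sigma>)"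
    by metis
  then obtain Z where Z: "\<And>n. 0 \<le> Z n \<and> Z n \<le> 1 \<and> fst (p n) = S n * (1 - (Z n)^2) \<and> Psi (S n) (Z n) - Psi (S n) 0 = sqrt lam * \<sigma>"
    by metis
  have "\<forall>n. S n \<in> {0..1}" using S by (auto intro: less_imp_le)
  then obtain l r where l: "l \<in> {0..1}" and r: "strict_mono (r :: nat \<Rightarrow> nat)" and Sr: "(S \<circ> r) \<longlonglongrightarrow> l"
    using seq_compactE[OF compact_imp_seq_compact[OF compact_Icc]] by metis
  define S' where "S' n = S (r n)" for n
  define X where "X n = fst (p (r n))" for n
  define Y where "Y n = snd (p (r n))" for n
  define Z' where "Z' n = Z (r n)" for n
  have S'l: "S' \<longlonglongrightarrow> l" using Sr unfolding S'_def comp_def .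
  have X0: "X \<longlonglongrightarrow> 0" using LIMSEQ_subseq_LIMSEQ[OF tendsto_fst[OF pl] r] unfolding X_def comp_def by simp
  have Yxi: "Y \<longlonglongrightarrow> \<xi>" using LIMSEQ_subseq_LIMSEQ[OF tendsto_snd[OF pl] r] unfolding Y_def comp_def by simp
  have GS: "G (S' n) = G (X n) + (Y n)^2 / (2 * lam)" for n
    using S[of "r n"] lam unfolding S'_def X_def Y_def by (simp add: field_simps)
  have "(\<lambda>n. G (X n) + (Y n)^2 / (2 * lam)) \<longlonglongrightarrow> G 0 + \<xi>^2 / (2 * lam)"
    by (intro tendsto_intros G_tendsto X0 Yxi) (use lam in auto)
  then have "(\<lambda>n. G (S' n)) \<longlonglongrightarrow> \<xi>^2 / (2 * lam)" using GS G_0 by simp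
  moreover have "(\<lambda>n. G (S' n)) \<longlonglongrightarrow> G l" by (rule G_tendsto[OF S'l])
  ultimately have Gl: "G l = \<xi>^2 / (2 * lam)" using LIMSEQ_unique by blast
  have Glpos: "0 < G l" unfolding Gl using xi lam by simp
  have l0: "0 < l"
  proof (rule ccontr)
    assume "\<not> 0 < l"
    then have "l = 0" using l by simp
    then show False using Glpos G_0 by simp
  qed
  have Z2: "(\<lambda>n. (Z' n)^2) \<longlonglongrightarrow> 1"
  proof -
    have e: "(Z' n)^2 = 1 - X n / S' n" for n
      using Z[of "r n"] S[of "r n"] unfolding Z'_def X_def S'_def by (simp add: field_simps)
    have "(\<lambda>n. 1 - X n / S' n) \<longlonglongrightarrow> 1 - 0 / l" by (intro tendsto_intros X0 S'l) (use l0 in auto)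
    then show ?thesis unfolding e by simp
  qed
  have "(\<lambda>n. sqrt ((Z' n)^2)) \<longlonglongrightarrow> sqrt 1" by (intro tendsto_intros Z2)
  moreover have "sqrt ((Z' n)^2) = Z' n" for n using Z[of "r n"] unfolding Z'_def by simp
  ultimately have Z'1: "Z' \<longlonglongrightarrow> 1" by simp
  define K where "K = 2 / sqrt (l / 48)"
  have rge: "0 \<le> tau (S' n) - sqrt lam * \<sigma>" for n using S[of "r n"] unfolding S'_def by simp
  have rle: "eventually (\<lambda>n. tau (S' n) - sqrt lam * \<sigma> \<le> K * (1 - Z' n)) sequentially"
  proof -
    have e1: "eventually (\<lambda>n. l/2 < S' n) sequentially" using order_tendstoD(1)[OF S'l, of "l/2"] l0 by simp
    have e2: "eventually (\<lambda>n. 1/2 < Z' n) sequentially" using order_tendstoD(1)[OF Z'1, of "1/2"] by simp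
    show ?thesis using e1 e2
    proof eventually_elim
      case (elim n)
      have sn: "0 < S' n" "S' n < 1" using S[of "r n"] unfolding S'_def by auto
      have zn: "Z' n \<le> 1" using Z[of "r n"] unfolding Z'_def by auto
      have "tau (S' n) - sqrt lam * \<sigma> = Psi (S' n) 1 - Psi (S' n) (Z' n)"
        using tau_Psi[OF sn] Z[of "r n"] unfolding S'_def Z'_def by simp
      also have "\<dots> \<le> 2 / sqrt (S' n / 24) * (1 - Z' n)"
        by (rule Psi_gap_upper[OF sn]) (use elim zn in auto)
      also have "\<dots> \<le> K * (1 - Z' n)"
      proof (rule mult_right_mono)
        have "sqrt (l / 48) \<le> sqrt (S' n / 24)" using elim by (simp add: real_sqrt_le_iff)
        then show "2 / sqrt (S' n / 24) \<le> K" unfolding K_def using l0 by (intro divide_left_mono) auto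
      qed (use zn in auto)
      finally show ?case .
    qed
  qed
  have "(\<lambda>n. K * (1 - Z' n)) \<longlonglongrightarrow> K * (1 - 1)" by (intro tendsto_intros Z'1)
  then have "(\<lambda>n. tau (S' n) - sqrt lam * \<sigma>) \<longlonglongrightarrow> 0"
    by (intro tendsto_sandwich[OF _ rle tendsto_const]) (use rge in auto)
  then have tl: "(\<lambda>n. tau (S' n)) \<longlonglongrightarrow> sqrt lam * \<sigma>"
    using tendsto_add[OF _ tendsto_const[of "sqrt lam * \<sigma>"], of "\<lambda>n. tau (S' n) - sqrt lam * \<sigma>" 0] by simp
  have l1: "l < 1"
  proof (rule ccontr)
    assume "\<not> l < 1"
    then have "l = 1" using l by simp
    obtain d where d: "0 < d" "\<And>s. 1 - d < s \<Longrightarrow> s < 1 \<Longrightarrow> sqrt lam * \<sigma> + 1 < tau s"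
      using tau_big1[of "sqrt lam * \<sigma> + 1"] by blast
    have e1: "eventually (\<lambda>n. 1 - d < S' n) sequentially" using order_tendstoD(1)[OF S'l, of "1 - d"] \<open>l = 1\<close> d by simp
    have e2: "eventually (\<lambda>n. tau (S' n) < sqrt lam * \<sigma> + 1) sequentially" using order_tendstoD(2)[OF tl] by simp
    have "eventually (\<lambda>n. False) sequentially" using e1 e2
    proof eventually_elim
      case (elim n)
      have "S' n < 1" using S[of "r n"] unfolding S'_def by auto
      then show False using d(2)[of "S' n"] elim by auto
    qed
    then show False by simp
  qed
  have "(\<lambda>n. tau (S' n)) \<longlonglongrightarrow> tau l" using isCont_tendsto_compose[OF tau_isCont[OF l0 l1] S'l] .
  then have taul: "tau l = sqrt lam * \<sigma>" using tl LIMSEQ_unique by blast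
  have "2 * lam * G l = \<xi>^2" unfolding Gl using lam by simp
  then have "\<xi> = sqrt (2 * lam * G l)" using xi by simp
  then show ?thesis using l0 l1 taul by blast
qed

lemma closure_char:
  assumes lam: "0 < lam" and sig: "0 < \<sigma>"
    and approx: "\<And>s. 0 < s \<Longrightarrow> s < 1 \<Longrightarrow> tau s = sqrt lam * \<sigma> \<Longrightarrow>
        \<exists>S. (\<forall>n. 0 < S n \<and> S n < 1 \<and> sqrt lam * \<sigma> < tau (S n)) \<and> S \<longlonglongrightarrow> s"
  shows "closure (Gamma1 lam \<sigma>) \<inter> ({0} \<times> {0<..}) = (\<lambda>s. (0::real, sqrt (2 * lam * G s))) ` {s. 0 < s \<and> s < 1 \<and> tau s = sqrt lam * \<sigma>}"
proof
  show "closure (Gamma1 lam \<sigma>) \<inter> ({0} \<times> {0<..}) \<subseteq> (\<lambda>s. (0::real, sqrt (2 * lam * G s))) ` {s. 0 < s \<and> s < 1 \<and> tau s = sqrt lam * \<sigma>}"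
  proof
    fix q assume q: "q \<in> closure (Gamma1 lam \<sigma>) \<inter> ({0} \<times> {0<..})"
    then obtain b where qb: "q = (0, b)" "0 < b" by auto
    then obtain s where "0 < s \<and> s < 1 \<and> tau s = sqrt lam * \<sigma> \<and> b = sqrt (2 * lam * G s)"
      using closure_sub[OF lam sig qb(2)] q by auto
    then show "q \<in> (\<lambda>s. (0::real, sqrt (2 * lam * G s))) ` {s. 0 < s \<and> s < 1 \<and> tau s = sqrt lam * \<sigma>}"
      using qb by auto
  qed
  show "(\<lambda>s. (0::real, sqrt (2 * lam * G s))) ` {s. 0 < s \<and> s < 1 \<and> tau s = sqrt lam * \<sigma>} \<subseteq> closure (Gamma1 lam \<sigma>) \<inter> ({0} \<times> {0<..})"
  proof
    fix q assume "q \<in> (\<lambda>s. (0::real, sqrt (2 * lam * G s))) ` {s. 0 < s \<and> s < 1 \<and> tau s = sqrt lam * \<sigma>}"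
    then obtain s where s: "0 < s" "s < 1" "tau s = sqrt lam * \<sigma>" and q: "q = (0, sqrt (2 * lam * G s))" by auto
    obtain S where S: "\<And>n. 0 < S n \<and> S n < 1 \<and> sqrt lam * \<sigma> < tau (S n)" "S \<longlonglongrightarrow> s"
      using approx[OF s] by blast
    have "q \<in> closure (Gamma1 lam \<sigma>)" unfolding q by (rule closure_sup[OF lam sig s(1,2,3) S])
    moreover have "0 < sqrt (2 * lam * G s)" using G_pos[of s] s lam by simp
    ultimately show "q \<in> closure (Gamma1 lam \<sigma>) \<inter> ({0} \<times> {0<..})" using q by auto
  qed
qed

lemma left_seq: assumes "0 < (a::real)" shows "\<exists>S. (\<forall>n. 0 < S n \<and> S n < a) \<and> S \<longlonglongrightarrow> a"
proof -
  define S where "S n = a * (1 - inverse (real (Suc n)) / 2)" for n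
  have "0 < S n \<and> S n < a" for n
  proof -
    have "0 < inverse (real (Suc n))" "inverse (real (Suc n)) \<le> 1" by (auto simp: field_simps)
    then have "0 < 1 - inverse (real (Suc n)) / 2" "1 - inverse (real (Suc n)) / 2 < 1" by linarith+
    then show ?thesis unfolding S_def using assms by (simp add: mult_pos_pos)
  qed
  moreover have "S \<longlonglongrightarrow> a * (1 - 0 / 2)" unfolding S_def by (intro tendsto_intros LIMSEQ_inverse_real_of_nat) auto
  ultimately show ?thesis by auto
qed

lemma right_seq: assumes "(a::real) < 1" shows "\<exists>S. (\<forall>n. a < S n \<and> S n < 1) \<and> S \<longlonglongrightarrow> a"
proof -
  define S where "S n = a + (1 - a) * (inverse (real (Suc n)) / 2)" for n
  have "a < S n \<and> S n < 1" for n
  proof -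
    have "0 < inverse (real (Suc n))" "inverse (real (Suc n)) \<le> 1" by (auto simp: field_simps)
    then have i: "0 < inverse (real (Suc n)) / 2" "inverse (real (Suc n)) / 2 < 1" by linarith+
    have "0 < (1 - a) * (inverse (real (Suc n)) / 2)" using i assms by simp
    moreover have "(1 - a) * (inverse (real (Suc n)) / 2) < (1 - a) * 1" using i assms by (intro mult_strict_left_mono) auto
    ultimately show ?thesis unfolding S_def by simp
  qed
  moreover have "S \<longlonglongrightarrow> a + (1 - a) * (0 / 2)" unfolding S_def by (intro tendsto_intros LIMSEQ_inverse_real_of_nat) auto
  ultimately show ?thesis by auto
qed

theorem corollary2p2:
  fixes \<sigma> :: real
  assumes "0 < \<sigma>" and "\<sigma> < 1/2"
  shows "\<exists>ls>0.
    (\<forall>lam. 0 < lam \<and> lam < ls \<longrightarrow> closure (Gamma1 lam \<sigma>) \<inter> ({0} \<times> {0<..}) = {}) \<and>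
    (\<exists>\<xi>>0. closure (Gamma1 ls \<sigma>) \<inter> ({0} \<times> {0<..}) = {(0, \<xi>)}) \<and>
    (\<forall>lam>ls. \<exists>\<xi>0 \<xi>1. 0 < \<xi>0 \<and> \<xi>0 < \<xi>1 \<and>
        closure (Gamma1 lam \<sigma>) \<inter> ({0} \<times> {0<..}) = {(0, \<xi>0), (0, \<xi>1)})"
proof -
  have sig: "0 < \<sigma>" by fact
  obtain s0 where s0: "0 < s0" "s0 < 1" and glob: "\<And>s. 0 < s \<Longrightarrow> s < 1 \<Longrightarrow> tau s0 \<le> tau s"
    and dec: "\<And>x y. 0 < x \<Longrightarrow> x < y \<Longrightarrow> y \<le> s0 \<Longrightarrow> tau y < tau x"
    and inc: "\<And>x y. s0 \<le> x \<Longrightarrow> x < y \<Longrightarrow> y < 1 \<Longrightarrow> tau x < tau y"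
    using tau_shape by blast
  define m where "m = tau s0"
  have m: "0 < m" unfolding m_def using tau_pos[OF s0] .
  define ls where "ls = (m / \<sigma>)^2"
  have ls: "0 < ls" unfolding ls_def using m sig by simp
  have sls: "sqrt ls * \<sigma> = m" unfolding ls_def using m sig by simp
  have lt_iff: "sqrt lam * \<sigma> < m \<longleftrightarrow> lam < ls" if "0 < lam" for lam
  proof -
    have "sqrt lam * \<sigma> < m \<longleftrightarrow> sqrt lam < sqrt ls" using sls sig by (metis mult_less_cancel_right_pos)
    then show ?thesis using that ls by simp
  qed
  have strict_min: "tau s0 < tau s" if "0 < s" "s < 1" "s \<noteq> s0" for s
    using dec[of s s0] inc[of s0 s] that s0 by (cases "s < s0") auto
  have P1: "closure (Gamma1 lam \<sigma>) \<inter> ({0} \<times> {0<..}) = {}" if lam: "0 < lam" "lam < ls" for lam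
  proof -
    have R: "{s. 0 < s \<and> s < 1 \<and> tau s = sqrt lam * \<sigma>} = {}"
      using lt_iff[OF lam(1)] lam glob unfolding m_def by force
    have "closure (Gamma1 lam \<sigma>) \<inter> ({0} \<times> {0<..}) = (\<lambda>s. (0::real, sqrt (2 * lam * G s))) ` {s. 0 < s \<and> s < 1 \<and> tau s = sqrt lam * \<sigma>}"
      by (rule closure_char[OF lam(1) sig]) (use R in auto)
    then show ?thesis using R by simp
  qed
  have P2: "\<exists>\<xi>>0. closure (Gamma1 ls \<sigma>) \<inter> ({0} \<times> {0<..}) = {(0, \<xi>)}"
  proof -
    have R: "{s. 0 < s \<and> s < 1 \<and> tau s = sqrt ls * \<sigma>} = {s0}"
      using strict_min s0 unfolding sls m_def by force
    have "closure (Gamma1 ls \<sigma>) \<inter> ({0} \<times> {0<..}) = (\<lambda>s. (0::real, sqrt (2 * ls * G s))) ` {s. 0 < s \<and> s < 1 \<and> tau s = sqrt ls * \<sigma>}"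
    proof (rule closure_char[OF ls sig])
      fix s assume s: "0 < s" "s < 1" "tau s = sqrt ls * \<sigma>"
      then have "s = s0" using R by auto
      obtain S where S: "\<forall>n. 0 < S n \<and> S n < s0" "S \<longlonglongrightarrow> s0" using left_seq[OF s0(1)] by blast
      have "\<forall>n. 0 < S n \<and> S n < 1 \<and> sqrt ls * \<sigma> < tau (S n)"
      proof
        fix n
        have n: "0 < S n" "S n < s0" using S(1) by auto
        then have "tau s0 < tau (S n)" using dec[of "S n" s0] by simp
        then show "0 < S n \<and> S n < 1 \<and> sqrt ls * \<sigma> < tau (S n)" using n s0 unfolding sls m_def by simp
      qed
      then show "\<exists>S. (\<forall>n. 0 < S n \<and> S n < 1 \<and> sqrt ls * \<sigma> < tau (S n)) \<and> S \<longlonglongrightarrow> s"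
        using S(2) \<open>s = s0\<close> by blast
    qed
    moreover have "0 < sqrt (2 * ls * G s0)" using G_pos[of s0] s0 ls by simp
    ultimately show ?thesis unfolding R by auto
  qed
  have P3: "\<exists>\<xi>0 \<xi>1. 0 < \<xi>0 \<and> \<xi>0 < \<xi>1 \<and> closure (Gamma1 lam \<sigma>) \<inter> ({0} \<times> {0<..}) = {(0, \<xi>0), (0, \<xi>1)}"
    if lam: "ls < lam" for lam
  proof -
    have lam0: "0 < lam" using lam ls by simp
    define c where "c = sqrt lam * \<sigma>"
    have "sqrt ls < sqrt lam" using lam ls by simp
    then have "sqrt ls * \<sigma> < sqrt lam * \<sigma>" using sig by simp
    then have mc: "m < c" unfolding c_def sls .
    have tc: "continuous_on {a..b} tau" if "0 < a" "b < 1" for a b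
      using tau_cont by (rule continuous_on_subset) (use that in auto)
    obtain d1 where d1: "0 < d1" "\<And>s. 0 < s \<Longrightarrow> s < d1 \<Longrightarrow> c < tau s" using tau_big0[of c] by blast
    define a where "a = min (d1/2) (s0/2)"
    have a: "0 < a" "a < s0" "c < tau a" unfolding a_def using d1 s0 by auto
    obtain s1 where s1: "a \<le> s1" "s1 \<le> s0" "tau s1 = c"
      using IVT2'[of tau s0 c a] a tc[of a s0] s0 mc unfolding m_def by auto
    have s1': "0 < s1" "s1 < s0" using s1 a mc unfolding m_def by (auto simp: order.order_iff_strict)
    obtain d2 where d2: "0 < d2" "\<And>s. 1 - d2 < s \<Longrightarrow> s < 1 \<Longrightarrow> c < tau s" using tau_big1[of c] by blast
    define b where "b = max (1 - d2/2) ((1 + s0)/2)"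
    have b: "s0 < b" "b < 1" "c < tau b" unfolding b_def using d2 s0 by (auto simp: max_def)
    obtain s2 where s2: "s0 \<le> s2" "s2 \<le> b" "tau s2 = c"
      using IVT'[of tau s0 c b] b tc[of s0 b] s0 mc unfolding m_def by auto
    have s2': "s0 < s2" "s2 < 1" using s2 b mc unfolding m_def by (auto simp: order.order_iff_strict)
    have R: "{s. 0 < s \<and> s < 1 \<and> tau s = c} = {s1, s2}"
    proof
      show "{s1, s2} \<subseteq> {s. 0 < s \<and> s < 1 \<and> tau s = c}" using s1 s1' s2 s2' s0 by auto
      show "{s. 0 < s \<and> s < 1 \<and> tau s = c} \<subseteq> {s1, s2}"
      proof
        fix s assume s: "s \<in> {s. 0 < s \<and> s < 1 \<and> tau s = c}"
        show "s \<in> {s1, s2}"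
        proof (cases "s \<le> s0")
          case True
          have "s = s1"
          proof (rule ccontr)
            assume "s \<noteq> s1"
            then have "s < s1 \<or> s1 < s" by auto
            then show False using dec[of s s1] dec[of s1 s] s s1 s1' True by auto
          qed
          then show ?thesis by simp
        next
          case False
          have "s = s2"
          proof (rule ccontr)
            assume "s \<noteq> s2"
            then have "s < s2 \<or> s2 < s" by auto
            then show False using inc[of s s2] inc[of s2 s] s s2 s2' False by auto
          qed
          then show ?thesis by simp
        qed
      qed
    qed
    have "closure (Gamma1 lam \<sigma>) \<inter> ({0} \<times> {0<..}) = (\<lambda>s. (0::real, sqrt (2 * lam * G s))) ` {s. 0 < s \<and> s < 1 \<and> tau s = sqrt lam * \<sigma>}"
    proof (rule closure_char[OF lam0 sig])
      fix s assume s: "0 < s" "s < 1" "tau s = sqrt lam * \<sigma>"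
      then have "s = s1 \<or> s = s2" using R unfolding c_def by auto
      then show "\<exists>S. (\<forall>n. 0 < S n \<and> S n < 1 \<and> sqrt lam * \<sigma> < tau (S n)) \<and> S \<longlonglongrightarrow> s"
      proof
        assume "s = s1"
        obtain S where S: "\<forall>n. 0 < S n \<and> S n < s1" "S \<longlonglongrightarrow> s1" using left_seq[OF s1'(1)] by blast
        have "\<forall>n. 0 < S n \<and> S n < 1 \<and> sqrt lam * \<sigma> < tau (S n)"
        proof
          fix n
          have n: "0 < S n" "S n < s1" using S(1) by auto
          then have "tau s1 < tau (S n)" using dec[of "S n" s1] s1 by simp
          then show "0 < S n \<and> S n < 1 \<and> sqrt lam * \<sigma> < tau (S n)" using n s1 s1' s0 unfolding c_def by simp
        qed
        then show ?thesis using S(2) \<open>s = s1\<close> by blast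
      next
        assume "s = s2"
        obtain S where S: "\<forall>n. s2 < S n \<and> S n < 1" "S \<longlonglongrightarrow> s2" using right_seq[OF s2'(2)] by blast
        have "\<forall>n. 0 < S n \<and> S n < 1 \<and> sqrt lam * \<sigma> < tau (S n)"
        proof
          fix n
          have n: "s2 < S n" "S n < 1" using S(1) by auto
          then have "tau s2 < tau (S n)" using inc[of s2 "S n"] s2 by simp
          then show "0 < S n \<and> S n < 1 \<and> sqrt lam * \<sigma> < tau (S n)" using n s2 s2' s0 unfolding c_def by simp
        qed
        then show ?thesis using S(2) \<open>s = s2\<close> by blast
      qed
    qed
    then have eq: "closure (Gamma1 lam \<sigma>) \<inter> ({0} \<times> {0<..}) = {(0, sqrt (2 * lam * G s1)), (0, sqrt (2 * lam * G s2))}"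
      using R unfolding c_def by simp
    have "G s1 < G s2" using G_mono01[of s1 s2] s1' s2' by simp
    then have lt: "sqrt (2 * lam * G s1) < sqrt (2 * lam * G s2)" using lam0 by simp
    have pos: "0 < sqrt (2 * lam * G s1)" using G_pos[of s1] s1' s0 lam0 by simp
    show ?thesis using eq lt pos by blast
  qed
  show ?thesis using ls P1 P2 P3 by blast
qed


end
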